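(* For every $n\ge1$, every $\varepsilon>0$ and every $\lambda>0$, $$P\big(|X_n-\mu_n|\ge\varepsilon\mu_n\big)\le 2\exp\Big[3\varepsilon\lambda+\max\big(12\lambda^2,\,2e^{\lambda}\big)\Big]\,n^{-2\varepsilon\lambda}.$$
   Context: Let $X_n$ be the number of comparisons used by randomized Quicksort (uniform random pivot) on $n$ distinct numbers. Equivalently, $X_0=0$ and $$X_n\stackrel{d}{=}X_{U_n-1}+X^*_{n-U_n}+n-1,$$ with $U_n$ uniform on $\{1,\dots,n\}$, $X_j^*\stackrel{d}{=}X_j$, all independent. $\mu_n:=\mathbf EX_n=2(n+1)H_n-4n$, where $H_n=\sum_{k=1}^n1/k$. *)

theory Defs
  imports "HOL-Probability.Probability"
begin

text \<open>Distributions of the number of comparisons of randomized Quicksort.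
  qs_upto n is the list of the laws of X_0, ..., X_n, built by the distributional
  recursion X_n = X_{U_n - 1} + X'_{n - U_n} + n - 1 with U_n uniform on {1..n}
  and all variables independent.\<close>

primrec qs_upto :: "nat \<Rightarrow> nat pmf list" where
  "qs_upto 0 = [return_pmf 0]"
| "qs_upto (Suc m) =
     (let L = qs_upto m in
      L @ [pmf_of_set {1..Suc m} \<bind>
             (\<lambda>u. (L ! (u - 1)) \<bind>
               (\<lambda>a. (L ! (Suc m - u)) \<bind>
                 (\<lambda>b. return_pmf (a + b + m))))])"

definition qs_pmf :: "nat \<Rightarrow> nat pmf" where
  "qs_pmf n = qs_upto n ! n"

definition qs_mean :: "nat \<Rightarrow> real" where
  "qs_mean n = 2 * (real n + 1) * harm n - 4 * real n"

end

theory Submission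
  imports Defs "HOL-Analysis.Analysis"
begin

lemma exp_neg_le_quad:
  fixes x :: real assumes "0 \<le> x"
  shows "exp (-x) \<le> 1 - x + x\<^sup>2 / 2"
proof -
  let ?f = "\<lambda>y::real. exp y * (1 - y + y\<^sup>2 / 2)"
  have "?f 0 \<le> ?f x"
  proof (rule DERIV_nonneg_imp_nondecreasing[OF assms])
    fix y :: real assume "0 \<le> y" "y \<le> x"
    show "\<exists>d. DERIV ?f y :> d \<and> d \<ge> 0"
    proof (intro exI conjI)
      show "DERIV ?f y :> exp y * y\<^sup>2 / 2"
        by (rule derivative_eq_intros refl | simp)+ (simp add: algebra_simps power2_eq_square)
      show "0 \<le> exp y * y\<^sup>2 / 2" by simp
    qed
  qed
  hence "1 \<le> exp x * (1 - x + x\<^sup>2 / 2)" by simp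
  hence "exp (-x) * 1 \<le> exp (-x) * (exp x * (1 - x + x\<^sup>2 / 2))"
    by (intro mult_left_mono) auto
  thus ?thesis by (simp add: exp_minus field_simps)
qed

lemma exp_sinh_bound:
  fixes y :: real assumes "0 \<le> y"
  shows "y * exp (y/2) \<le> exp y - 1"
proof -
  define u where "u = y/2"
  have u: "0 \<le> u" using assms by (simp add: u_def)
  have a: "1 + u + u\<^sup>2/2 \<le> exp u" using exp_lower_Taylor_quadratic[OF u] .
  have b: "exp (-u) \<le> 1 - u + u\<^sup>2/2" using exp_neg_le_quad[OF u] .
  have "2*u \<le> exp u - exp (-u)" using a b by linarith
  hence "exp u * (2*u) \<le> exp u * (exp u - exp (-u))" by (intro mult_left_mono) auto
  also have "\<dots> = exp y - 1" by (simp add: u_def algebra_simps flip: exp_add exp_diff)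
  finally show ?thesis by (simp add: u_def algebra_simps)
qed

lemma chord_pos:
  fixes x v :: real assumes "0 \<le> x" "x \<le> v" "0 < v"
  shows "exp x \<le> 1 + x * (exp v - 1) / v"
proof -
  define l where "l = x / v"
  have l: "0 \<le> l" "l \<le> 1" using assms by (auto simp: l_def field_simps)
  have "exp ((1 - l) *\<^sub>R 0 + l *\<^sub>R v) \<le> (1 - l) * exp 0 + l * exp v"
    using l by (intro convex_onD[OF exp_convex]) auto
  moreover have "(1 - l) *\<^sub>R 0 + l *\<^sub>R v = x" using assms by (simp add: l_def)
  ultimately have "exp x \<le> (1 - l) + l * exp v" by simp
  also have "\<dots> = 1 + x * (exp v - 1) / v" using assms by (simp add: l_def field_simps)
  finally show ?thesis .
qed

lemma chord_neg:
  fixes x v :: real assumes "-v \<le> x" "x \<le> 0" "0 < v"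
  shows "exp x \<le> 1 + x * (1 - exp (-v)) / v"
proof -
  define l where "l = -x / v"
  have l: "0 \<le> l" "l \<le> 1" using assms by (auto simp: l_def field_simps)
  have "exp ((1 - l) *\<^sub>R 0 + l *\<^sub>R (-v)) \<le> (1 - l) * exp 0 + l * exp (-v)"
    using l by (intro convex_onD[OF exp_convex]) auto
  moreover have "(1 - l) *\<^sub>R 0 + l *\<^sub>R (-v) = x" using assms by (simp add: l_def)
  ultimately have "exp x \<le> (1 - l) + l * exp (-v)" by simp
  also have "\<dots> = 1 + x * (1 - exp (-v)) / v" using assms by (simp add: l_def field_simps)
  finally show ?thesis .
qed

lemma exp_minus_sq_le:
  fixes y :: real assumes "0 \<le> y"
  shows "exp (y - y\<^sup>2) \<le> 1 + y"
proof (cases "y \<le> 1")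
  case True
  have "y - y\<^sup>2 \<le> ln (1 + y)" using ln_one_plus_pos_lower_bound[OF assms True] .
  hence "exp (y - y\<^sup>2) \<le> exp (ln (1 + y))" by simp
  thus ?thesis using assms by simp
next
  case False
  hence "y \<le> y * y" by (simp add: mult_le_cancel_left1)
  hence "y - y\<^sup>2 \<le> 0" by (simp add: power2_eq_square)
  hence "exp (y - y\<^sup>2) \<le> 1" by (simp only: exp_le_one_iff)
  thus ?thesis using assms by linarith
qed

lemma PQ_basic:
  fixes P Q M :: real
  assumes P: "1 \<le> P" and Q: "1 \<le> Q" and M: "M = P + Q"
  shows "P * Q \<ge> 1" "4 * P * Q \<le> M\<^sup>2" "(P - Q)\<^sup>2 \<le> M\<^sup>2" "M > 0"
    "(P - Q)\<^sup>2 = M\<^sup>2 - 4 * P * Q" "P * Q \<ge> M - 1"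
proof -
  have e: "(P - Q)\<^sup>2 = M\<^sup>2 - 4 * P * Q" using M by (simp add: power2_eq_square algebra_simps)
  show "(P - Q)\<^sup>2 = M\<^sup>2 - 4 * P * Q" by (rule e)
  have "1 * 1 \<le> P * Q" using P Q by (intro mult_mono) auto
  hence p1: "P * Q \<ge> 1" by simp
  show "P * Q \<ge> 1" by (rule p1)
  have "(P - Q)\<^sup>2 \<ge> 0" by simp
  thus "4 * P * Q \<le> M\<^sup>2" using e by linarith
  show "(P - Q)\<^sup>2 \<le> M\<^sup>2" using e p1 by linarith
  show "M > 0" using P Q M by simp
  have "(P - 1) * (Q - 1) \<ge> 0" using P Q by simp
  thus "P * Q \<ge> M - 1" using M by (simp add: algebra_simps)
qed

lemma pw_lower:
  fixes P Q M r c :: real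
  assumes P: "1 \<le> P" and Q: "1 \<le> Q" and M: "M = P + Q" and r: "0 < r"
    and cu: "c \<le> (P - Q)\<^sup>2 / M" and cl: "- 2 * P * Q / M \<le> c"
  shows "exp (- r * c - 12 * r\<^sup>2 * (2 * P * Q - 1))
           \<le> 1 + (1 - exp (- (r * M))) / (r * M) * (- r * c)"
proof -
  define s where "s = r * M"
  define b where "b = (1 - exp (- s)) / s"
  define z where "z = - r * c"
  define g where "g = 12 * r\<^sup>2 * (2 * P * Q - 1)"
  note B = PQ_basic[OF P Q M]
  have Mpos: "M > 0" using B by simp
  have spos: "s > 0" using r Mpos by (simp add: s_def)
  have PQ1: "P * Q \<ge> 1" using B by simp
  have g0: "g \<ge> 0" using PQ1 by (simp add: g_def)
  have gl: "g \<ge> 2 * (r\<^sup>2 * (P * Q))"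
  proof -
    have "r\<^sup>2 * (P * Q) \<le> r\<^sup>2 * (2 * P * Q - 1)" using PQ1 by (intro mult_left_mono) auto
    moreover have "r\<^sup>2 * (P * Q) \<ge> 0" using PQ1 by simp
    moreover have "g = 12 * (r\<^sup>2 * (2 * P * Q - 1))" by (simp add: g_def)
    ultimately show ?thesis by linarith
  qed
  show ?thesis
  proof (cases "z \<le> 0")
    case True
    have "(P - Q)\<^sup>2 / M \<le> M\<^sup>2 / M" using B Mpos by (intro divide_right_mono) auto
    also have "M\<^sup>2 / M = M" using Mpos by (simp add: power2_eq_square)
    finally have "c \<le> M" using cu by linarith
    hence "r * c \<le> r * M" using r by (intro mult_left_mono) auto
    hence zl: "- s \<le> z" by (simp add: z_def s_def)
    have "exp (z - g) \<le> exp z" using g0 by simp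
    also have "\<dots> \<le> 1 + z * (1 - exp (- s)) / s" by (rule chord_neg[OF zl True spos])
    finally show ?thesis by (simp add: z_def g_def s_def mult.commute)
  next
    case False
    hence zp: "z > 0" by simp
    have "r * (- 2 * P * Q / M) \<le> r * c" using cl r by (intro mult_left_mono) auto
    hence zU: "z \<le> 2 * r * P * Q / M" by (simp add: z_def)
    have b1: "b \<le> 1"
    proof -
      have "1 - s \<le> exp (-s)" using exp_ge_add_one_self[of "-s"] by simp
      hence "1 - exp (-s) \<le> s" by simp
      thus ?thesis using spos by (simp add: b_def)
    qed
    have b0: "b \<ge> 0" using spos by (simp add: b_def)
    have b2: "1 - b \<le> s / 2"
    proof -
      have "exp (-s) \<le> 1 - s + s\<^sup>2/2" using exp_neg_le_quad spos by simp
      hence "s - s\<^sup>2/2 \<le> 1 - exp (-s)" by simp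
      hence "(s - s\<^sup>2/2) / s \<le> (1 - exp (-s)) / s" using spos by (intro divide_right_mono) auto
      also have "(s - s\<^sup>2/2) / s = 1 - s/2" using spos by (simp add: power2_eq_square diff_divide_distrib)
      finally have "1 - s/2 \<le> b" by (simp add: b_def)
      thus ?thesis by linarith
    qed
    have t1: "(1 - b) * z \<le> r\<^sup>2 * (P * Q)"
    proof -
      have "(1 - b) * z \<le> (s/2) * z" using b2 zp by (intro mult_right_mono) auto
      also have "\<dots> \<le> (s/2) * (2 * r * P * Q / M)" using zU spos by (intro mult_left_mono) auto
      also have "\<dots> = r\<^sup>2 * (P * Q)" using Mpos by (simp add: s_def power2_eq_square)
      finally show ?thesis .
    qed
    have t2: "(b * z)\<^sup>2 \<le> r\<^sup>2 * (P * Q)"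
    proof -
      have "b * z \<le> 1 * z" using b1 zp by (intro mult_right_mono) auto
      hence "(b * z)\<^sup>2 \<le> z\<^sup>2" using b0 zp by (intro power_mono) auto
      also have "\<dots> \<le> (2 * r * P * Q / M)\<^sup>2" using zp zU by (intro power_mono) auto
      also have "\<dots> = (r\<^sup>2 * (P * Q)) * (4 * P * Q / M\<^sup>2)"
        by (simp add: power2_eq_square power_divide)
      also have "\<dots> \<le> (r\<^sup>2 * (P * Q)) * 1"
        using B Mpos PQ1 by (intro mult_left_mono) auto
      finally show ?thesis by simp
    qed
    have "z - g \<le> b * z - (b * z)\<^sup>2" using t1 t2 gl by (simp add: algebra_simps)
    hence "exp (z - g) \<le> exp (b * z - (b * z)\<^sup>2)" by simp
    also have "\<dots> \<le> 1 + b * z" using b0 zp by (intro exp_minus_sq_le) auto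
    finally show ?thesis by (simp add: z_def g_def s_def b_def)
  qed
qed

lemma c_le_M:
  fixes P Q M c :: real
  assumes P: "1 \<le> P" and Q: "1 \<le> Q" and M: "M = P + Q" and cu: "c \<le> (P - Q)\<^sup>2 / M"
  shows "c \<le> M"
proof -
  note B = PQ_basic[OF P Q M]
  have "(P - Q)\<^sup>2 / M \<le> M\<^sup>2 / M" using B by (intro divide_right_mono) auto
  also have "M\<^sup>2 / M = M" using B by (simp add: power2_eq_square)
  finally show ?thesis using cu by linarith
qed

lemma sq_bound_PQ:
  fixes P Q M t :: real
  assumes P: "1 \<le> P" and Q: "1 \<le> Q" and M: "M = P + Q"
  shows "(2 * t * P * Q / M)\<^sup>2 \<le> t\<^sup>2 * (P * Q)"
proof -
  note B = PQ_basic[OF P Q M]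
  have "(2 * t * P * Q / M)\<^sup>2 = (t\<^sup>2 * (P * Q)) * (4 * P * Q / M\<^sup>2)"
    by (simp add: power2_eq_square power_divide)
  also have "\<dots> \<le> (t\<^sup>2 * (P * Q)) * 1"
    using B by (intro mult_left_mono) auto
  finally show ?thesis by simp
qed

lemma g_lower:
  fixes P Q M t :: real
  assumes P: "1 \<le> P" and Q: "1 \<le> Q"
  shows "12 * t\<^sup>2 * (2 * P * Q - 1) \<ge> 12 * (t\<^sup>2 * (P * Q))"
proof -
  have PQ1: "P * Q \<ge> 1" using PQ_basic[OF P Q refl] by simp
  have "t\<^sup>2 * (P * Q) \<le> t\<^sup>2 * (2 * P * Q - 1)" using PQ1 by (intro mult_left_mono) auto
  thus ?thesis by simp
qed

lemma pw_Q1: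
  fixes P Q M t c :: real
  assumes P: "1 \<le> P" and Q: "1 \<le> Q" and M: "M = P + Q" and t: "0 < t"
    and sm: "t * M \<le> 3/4"
    and cu: "c \<le> (P - Q)\<^sup>2 / M" and cl: "- 2 * P * Q / M \<le> c"
  shows "exp (t * c - 12 * t\<^sup>2 * (2 * P * Q - 1))
           \<le> 1 + (exp (t * M) - 1) / (t * M) * (t * c)"
proof -
  define s where "s = t * M"
  define b where "b = (exp s - 1) / s"
  define z where "z = t * c"
  define g where "g = 12 * t\<^sup>2 * (2 * P * Q - 1)"
  note B = PQ_basic[OF P Q M]
  have Mpos: "M > 0" using B by simp
  have spos: "s > 0" using t Mpos by (simp add: s_def)
  have s34: "s \<le> 3/4" using sm by (simp add: s_def)
  have PQ1: "P * Q \<ge> 1" using B by simp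
  have gl: "g \<ge> 12 * (t\<^sup>2 * (P * Q))" unfolding g_def by (rule g_lower[OF P Q])
  have g0: "g \<ge> 0" using gl PQ1 by (smt (verit) mult_nonneg_nonneg zero_le_power2)
  show ?thesis
  proof (cases "z \<ge> 0")
    case True
    have "c \<le> M" by (rule c_le_M[OF P Q M cu])
    hence "t * c \<le> t * M" using t by (intro mult_left_mono) auto
    hence zs: "z \<le> s" by (simp add: z_def s_def)
    have "exp (z - g) \<le> exp z" using g0 by simp
    also have "\<dots> \<le> 1 + z * (exp s - 1) / s" by (rule chord_pos[OF True zs spos])
    finally show ?thesis by (simp add: z_def g_def s_def mult.commute)
  next
    case False
    define w where "w = - z"
    have wp: "w > 0" using False by (simp add: w_def)
    have "t * (- 2 * P * Q / M) \<le> t * c" using cl t by (intro mult_left_mono) auto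
    hence wU: "w \<le> 2 * t * P * Q / M" by (simp add: w_def z_def)
    have "2 * t * P * Q / M \<le> s / 2"
    proof -
      have "2 * t * P * Q / M = (t / (2 * M)) * (4 * P * Q)" by (simp add: field_simps)
      also have "\<dots> \<le> (t / (2 * M)) * M\<^sup>2" using B t by (intro mult_left_mono) auto
      also have "\<dots> = s / 2" using Mpos by (simp add: s_def power2_eq_square)
      finally show ?thesis .
    qed
    hence ws: "w \<le> s / 2" using wU by linarith
    have b1: "b \<ge> 1" using spos exp_ge_add_one_self[of s] by (simp add: b_def field_simps)
    have b2: "b \<le> 1 + s"
    proof -
      have "exp s \<le> 1 + s + s\<^sup>2" using exp_bound[of s] spos s34 by simp
      hence "exp s - 1 \<le> s * (1 + s)" by (simp add: power2_eq_square algebra_simps)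
      thus ?thesis using spos by (simp add: b_def divide_le_eq mult.commute)
    qed
    have bw: "b * w \<le> 21/32"
    proof -
      have "b * w \<le> (1 + s) * (s / 2)" using b1 b2 wp ws by (intro mult_mono) auto
      also have "\<dots> \<le> (7/4) * (3/8)" using spos s34 by (intro mult_mono) auto
      finally show ?thesis by simp
    qed
    have Dw: "(b - 1) * w \<le> 2 * (t\<^sup>2 * (P * Q))"
    proof -
      have "(b - 1) * w \<le> s * (2 * t * P * Q / M)" using b1 b2 wp wU spos by (intro mult_mono) auto
      also have "\<dots> = 2 * (t\<^sup>2 * (P * Q))" using Mpos by (simp add: s_def power2_eq_square)
      finally show ?thesis .
    qed
    have w2: "w\<^sup>2 \<le> t\<^sup>2 * (P * Q)"
    proof -
      have "w\<^sup>2 \<le> (2 * t * P * Q / M)\<^sup>2" using wp wU by (intro power_mono) auto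
      also have "\<dots> \<le> t\<^sup>2 * (P * Q)" by (rule sq_bound_PQ[OF P Q M])
      finally show ?thesis .
    qed
    have key: "w\<^sup>2 / 2 + (b - 1) * w \<le> g * (1 - b * w)"
    proof -
      have "g * (11/32) \<le> g * (1 - b * w)" using g0 bw by (intro mult_left_mono) auto
      moreover have "g * (11/32) \<ge> 12 * (t\<^sup>2 * (P * Q)) * (11/32)" using gl by linarith
      moreover have "t\<^sup>2 * (P * Q) \<ge> 0" using PQ1 by simp
      ultimately show ?thesis using Dw w2 by linarith
    qed
    have e1: "exp (- w) \<le> 1 - w + w\<^sup>2 / 2" using exp_neg_le_quad wp by simp
    have e2: "exp (- g) * (1 + g) \<le> 1"
    proof -
      have "1 + g \<le> exp g" by simp
      hence "exp (-g) * (1 + g) \<le> exp (-g) * exp g" by (intro mult_left_mono) auto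
      thus ?thesis by (simp add: exp_minus field_simps)
    qed
    have "exp (z - g) * (1 + g) = exp (- w) * (exp (- g) * (1 + g))"
      by (simp add: w_def exp_diff exp_minus field_simps)
    also have "\<dots> \<le> exp (- w) * 1" using e2 by (intro mult_left_mono) auto
    also have "\<dots> \<le> 1 - w + w\<^sup>2 / 2" using e1 by simp
    also have "\<dots> \<le> (1 - b * w) * (1 + g)" using key by (simp add: algebra_simps)
    finally have "exp (z - g) * (1 + g) \<le> (1 - b * w) * (1 + g)" .
    hence "exp (z - g) \<le> 1 - b * w" using g0 by (simp add: mult_le_cancel_right)
    thus ?thesis by (simp add: w_def z_def g_def s_def b_def)
  qed
qed

lemma pw_Q2a:
  fixes P Q M t c :: real
  assumes P: "1 \<le> P" and Q: "1 \<le> Q" and M: "M = P + Q" and t: "0 < t"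
    and M20: "M \<le> 20" and sm: "t * M \<ge> 3/4"
    and cu: "c \<le> (P - Q)\<^sup>2 / M"
  shows "t * c - 12 * t\<^sup>2 * (2 * P * Q - 1) \<le> 0"
proof -
  note B = PQ_basic[OF P Q M]
  have Mpos: "M > 0" using B by simp
  have M3: "M \<ge> 2" using P Q M by simp
  have "(P - Q)\<^sup>2 \<le> (M - 2)\<^sup>2" using B by (simp add: power2_eq_square algebra_simps)
  hence "(P - Q)\<^sup>2 / M \<le> (M - 2)\<^sup>2 / M" using Mpos by (intro divide_right_mono) auto
  hence "t * c \<le> t * ((M - 2)\<^sup>2 / M)" using cu t by (intro mult_left_mono) auto
  also have "\<dots> \<le> 12 * t\<^sup>2 * (2 * M - 3)"
  proof -
    have h: "(M - 2) * (20 - M) \<ge> 0" using M20 M3 by (intro mult_nonneg_nonneg) auto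
    have "(M - 2)\<^sup>2 = 9 * (2 * M - 3) - (M - 2) * (20 - M) - 9" by (simp add: power2_eq_square algebra_simps)
    hence q: "(M - 2)\<^sup>2 \<le> 9 * (2 * M - 3)" using h by linarith
    have "9 \<le> 12 * (t * M)" using sm by linarith
    hence "9 * (2 * M - 3) \<le> 12 * (t * M) * (2 * M - 3)" using M3 by (intro mult_right_mono) auto
    hence "(M - 2)\<^sup>2 \<le> 12 * (t * M) * (2 * M - 3)" using q by linarith
    hence "t * (M - 2)\<^sup>2 \<le> t * (12 * (t * M) * (2 * M - 3))" using t by (intro mult_left_mono) auto
    hence "t * (M - 2)\<^sup>2 / M \<le> t * (12 * (t * M) * (2 * M - 3)) / M" using Mpos by (intro divide_right_mono) auto
    thus ?thesis using Mpos by (simp add: power2_eq_square)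
  qed
  also have "\<dots> \<le> 12 * t\<^sup>2 * (2 * P * Q - 1)" using B by (intro mult_left_mono) auto
  finally show ?thesis by simp
qed

lemma cQP:
  fixes P Q M c :: real
  assumes P: "1 \<le> P" and Q: "1 \<le> Q" and M: "M = P + Q" and PQ: "P \<le> Q"
    and cu: "c \<le> (P - Q)\<^sup>2 / M"
  shows "c \<le> Q - P"
proof -
  note B = PQ_basic[OF P Q M]
  have "(P - Q)\<^sup>2 = (Q - P) * (Q - P)" by (simp add: power2_eq_square algebra_simps)
  also have "\<dots> \<le> (Q - P) * M" using PQ P Q M by (intro mult_left_mono) auto
  finally have "(P - Q)\<^sup>2 / M \<le> (Q - P) * M / M" using B by (intro divide_right_mono) auto
  thus ?thesis using cu B by simp
qed

lemma pw_Q2b_edge: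
  fixes P Q M t c :: real
  assumes P: "1 \<le> P" and Q: "1 \<le> Q" and M: "M = P + Q" and t: "0 < t"
    and PM: "P \<le> M / 4" and cu: "c \<le> (P - Q)\<^sup>2 / M"
  shows "t * c - 12 * t\<^sup>2 * (2 * P * Q - 1) \<le> (t * M + 12 * t\<^sup>2) - P * (t * (2 + 18 * (t * M)))"
proof -
  note B = PQ_basic[OF P Q M]
  have PQ: "P \<le> Q" using PM M P by simp
  have "c \<le> Q - P" by (rule cQP[OF P Q M PQ cu])
  hence 1: "t * c \<le> t * (M - 2 * P)" using t M by (intro mult_left_mono) auto
  have "Q \<ge> 3 * M / 4" using PM M by simp
  hence "P * Q \<ge> P * (3 * M / 4)" using P by (intro mult_left_mono) auto
  hence "2 * P * Q - 1 \<ge> 3 / 2 * P * M - 1" by simp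
  hence 2: "12 * t\<^sup>2 * (2 * P * Q - 1) \<ge> 12 * t\<^sup>2 * (3 / 2 * P * M - 1)" by (intro mult_left_mono) auto
  show ?thesis using 1 2 by (simp add: power2_eq_square algebra_simps)
qed

lemma pw_Q2b_bulk:
  fixes P Q M t c :: real
  assumes P: "1 \<le> P" and Q: "1 \<le> Q" and M: "M = P + Q" and t: "0 < t"
    and PQ: "P \<le> Q" and PM: "P \<ge> M / 4" and M21: "M \<ge> 21" and cu: "c \<le> (P - Q)\<^sup>2 / M"
  shows "t * c - 12 * t\<^sup>2 * (2 * P * Q - 1) \<le> (t * M) / 2 - 4 * (t * M)\<^sup>2"
proof -
  note B = PQ_basic[OF P Q M]
  have "c \<le> Q - P" by (rule cQP[OF P Q M PQ cu])
  also have "Q - P \<le> M / 2" using PM M by simp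
  finally have 1: "t * c \<le> t * M / 2" using t by (simp add: mult_left_mono)
  have "(P - M / 4) * (3 * M / 4 - P) \<ge> 0" using PM PQ M by (intro mult_nonneg_nonneg) auto
  moreover have "(P - M / 4) * (3 * M / 4 - P) = P * Q - 3 * M\<^sup>2 / 16" using M by (simp add: power2_eq_square field_simps)
  ultimately have "P * Q \<ge> 3 * M\<^sup>2 / 16" by linarith
  hence "2 * P * Q - 1 \<ge> 3 * M\<^sup>2 / 8 - 1" by simp
  hence 2: "12 * t\<^sup>2 * (2 * P * Q - 1) \<ge> 12 * t\<^sup>2 * (3 * M\<^sup>2 / 8 - 1)" by (intro mult_left_mono) auto
  have "t\<^sup>2 * 24 \<le> t\<^sup>2 * M\<^sup>2"
  proof -
    have "21 * 21 \<le> M * M" using M21 by (intro mult_mono) auto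
    hence "24 \<le> M\<^sup>2" by (simp add: power2_eq_square)
    thus ?thesis by (intro mult_left_mono) auto
  qed
  hence 3: "12 * t\<^sup>2 \<le> (t * M)\<^sup>2 / 2" by (simp add: power_mult_distrib)
  have "12 * t\<^sup>2 * (3 * M\<^sup>2 / 8 - 1) = 9 / 2 * (t * M)\<^sup>2 - 12 * t\<^sup>2" by (simp add: power_mult_distrib algebra_simps)
  thus ?thesis using 1 2 3 by linarith
qed

lemma geo_sum:
  fixes y :: "nat \<Rightarrow> real" and A k B :: real
  assumes k: "k > 0"
    and pw: "\<And>a. a < n \<Longrightarrow> exp (y a) \<le> exp (A - k * (real a + 1)) + exp (A - k * (real n - real a)) + B"
  shows "(\<Sum>a<n. exp (y a)) \<le> 2 * exp A / (exp k - 1) + real n * B"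
proof -
  define r where "r = exp (- k)"
  have r0: "0 < r" "r < 1" using k by (auto simp: r_def)
  have e: "exp (A - k * (real a + 1)) = exp A * r ^ Suc a" for a
  proof -
    have "exp (A - k * (real a + 1)) = exp (A + real (Suc a) * (-k))" by (simp add: algebra_simps)
    also have "\<dots> = exp A * exp (-k) ^ Suc a" by (simp only: exp_add exp_of_nat_mult)
    finally show ?thesis by (simp add: r_def)
  qed
  have g1: "(\<Sum>a<n. exp (A - k * (real a + 1))) \<le> exp A / (exp k - 1)"
  proof -
    have "(\<Sum>a<n. exp (A - k * (real a + 1))) = exp A * r * (\<Sum>a<n. r ^ a)"
      by (simp add: e sum_distrib_left mult.assoc)
    also have "(\<Sum>a<n. r ^ a) = (1 - r ^ n) / (1 - r)" using r0 by (simp add: sum_gp_strict)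
    also have "\<dots> \<le> 1 / (1 - r)" using r0 by (intro divide_right_mono) auto
    finally have "(\<Sum>a<n. exp (A - k * (real a + 1))) \<le> exp A * r * (1 / (1 - r))"
      using r0 by (simp add: mult_left_mono)
    also have "\<dots> = exp A / (exp k - 1)"
      using r0 k by (simp add: r_def exp_minus field_simps)
    finally show ?thesis .
  qed
  have g2: "(\<Sum>a<n. exp (A - k * (real n - real a))) = (\<Sum>a<n. exp (A - k * (real a + 1)))"
  proof -
    have "(\<Sum>a<n. exp (A - k * (real n - real a))) = (\<Sum>a<n. exp (A - k * (real (n - Suc a) + 1)))"
      by (intro sum.cong refl) (auto simp: of_nat_diff)
    also have "\<dots> = (\<Sum>a<n. exp (A - k * (real a + 1)))"
      by (rule sum.nat_diff_reindex)
    finally show ?thesis .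
  qed
  have "(\<Sum>a<n. exp (y a)) \<le> (\<Sum>a<n. exp (A - k * (real a + 1)) + exp (A - k * (real n - real a)) + B)"
    using pw by (intro sum_mono) auto
  also have "\<dots> = (\<Sum>a<n. exp (A - k * (real a + 1))) + (\<Sum>a<n. exp (A - k * (real n - real a))) + real n * B"
    by (simp add: sum.distrib)
  also have "\<dots> \<le> 2 * exp A / (exp k - 1) + real n * B" using g1 g2 by simp
  finally show ?thesis .
qed

lemma weight_sum:
  fixes y z :: "nat \<Rightarrow> real" and b :: real
  assumes pw: "\<And>a. a < n \<Longrightarrow> exp (y a) \<le> 1 + b * z a"
    and z0: "(\<Sum>a<n. z a) = 0"
  shows "(\<Sum>a<n. exp (y a)) \<le> real n"
proof -
  have "(\<Sum>a<n. exp (y a)) \<le> (\<Sum>a<n. 1 + b * z a)" using pw by (intro sum_mono) auto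
  also have "\<dots> = real n + b * (\<Sum>a<n. z a)" by (simp add: sum.distrib sum_distrib_left)
  finally show ?thesis using z0 by simp
qed

definition Phi :: "real \<Rightarrow> real" where
  "Phi x = (if x \<le> 21/4 then 12 * x\<^sup>2 else 2 * (exp x - 1 - x))"

lemma e_ge_2718: "exp 1 \<ge> (2718/1000::real)"
  using e_approx_32 by (simp add: abs_if split: if_split_asm)

lemma e_ge_52: "exp 1 \<ge> (5/2::real)"
  using e_ge_2718 by simp

lemma exp_S_ge: "exp (21/4::real) \<ge> 185"
proof -
  have "exp (21/4::real) = exp 1 ^ 5 * exp (1/4)"
    by (simp flip: exp_of_nat_mult exp_add)
  moreover have a: "exp 1 ^ 5 \<ge> (2718/1000::real) ^ 5" using e_ge_2718 by (intro power_mono) auto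
  moreover have b: "exp (1/4::real) \<ge> 41/32" using exp_lower_Taylor_quadratic[of "1/4::real"] by (simp add: power2_eq_square)
  moreover have "exp 1 ^ 5 * exp (1/4) \<ge> (2718/1000::real) ^ 5 * (41/32)"
    using a b by (intro mult_mono) auto
  moreover have "(2718/1000::real) ^ 5 * (41/32) \<ge> 185" by (simp add: power_divide)
  ultimately show ?thesis by linarith
qed

lemma exp_ge_from_S:
  fixes s :: real assumes "s \<ge> 21/4"
  shows "exp s \<ge> 185 * (1 + (s - 21/4) + (s - 21/4)\<^sup>2 / 2)"
proof -
  have "exp s = exp (21/4) * exp (s - 21/4)" by (simp flip: exp_add)
  moreover have t: "exp (s - 21/4) \<ge> 1 + (s - 21/4) + (s - 21/4)\<^sup>2 / 2"
    using exp_lower_Taylor_quadratic[of "s - 21/4"] assms by simp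
  moreover have "1 + (s - 21/4) + (s - 21/4)\<^sup>2 / 2 \<ge> 0" using assms by simp
  moreover have "185 * (1 + (s - 21/4) + (s - 21/4)\<^sup>2 / 2) \<le> exp (21/4) * exp (s - 21/4)"
    using exp_S_ge t \<open>1 + (s - 21/4) + (s - 21/4)\<^sup>2 / 2 \<ge> 0\<close> by (intro mult_mono) auto
  ultimately show ?thesis by simp
qed

lemma num_E1:
  fixes s :: real assumes s: "s \<ge> 21/4"
  shows "12 * s\<^sup>2 + s + 1 \<le> 2 * (exp s - 1 - s)"
proof -
  define r where "r = s - 21/4"
  have r: "r \<ge> 0" using s by (simp add: r_def)
  have e: "exp s \<ge> 185 * (1 + r + r\<^sup>2 / 2)" using exp_ge_from_S[OF s] by (simp add: r_def)
  have eq: "2 * (185 * (1 + r + r\<^sup>2 / 2) - 1 - s) - (12 * s\<^sup>2 + s + 1) = 173 * r\<^sup>2 + 241 * r + 41/2"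
    by (simp add: r_def power2_eq_square field_simps)
  have "173 * r\<^sup>2 + 241 * r + 41/2 \<ge> 0" using r by simp
  hence "12 * s\<^sup>2 + s + 1 \<le> 2 * (185 * (1 + r + r\<^sup>2 / 2) - 1 - s)" using eq by linarith
  also have "\<dots> \<le> 2 * (exp s - 1 - s)" using e by simp
  finally show ?thesis .
qed

lemma exp_half_ge:
  fixes s :: real assumes s: "s \<ge> 21/4"
  shows "exp (s/2) \<ge> 12"
proof -
  have e2: "exp (2::real) \<ge> 7"
  proof -
    have "exp (2::real) = exp 1 * exp 1" by (simp flip: exp_add)
    moreover have "exp 1 * exp 1 \<ge> (2718/1000::real) * (2718/1000)" using e_ge_2718 by (intro mult_mono) auto
    ultimately show ?thesis by linarith
  qed
  have "exp (s/2) = exp 2 * exp (s/2 - 2)" by (simp flip: exp_add)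
  moreover have "exp (s/2 - 2) \<ge> 1 + (s/2 - 2) + (s/2 - 2)\<^sup>2/2" using s by (intro exp_lower_Taylor_quadratic) auto
  moreover have "(s/2 - 2)\<^sup>2 \<ge> (5/8)\<^sup>2" using s by (intro power_mono) auto
  ultimately have "exp (s/2 - 2) \<ge> 233/128" using s by (simp add: power2_eq_square)
  hence "exp 2 * exp (s/2 - 2) \<ge> 7 * (233/128)"
    using e2 by (intro mult_mono) auto
  hence "exp (s/2) \<ge> 7 * (233/128)" using \<open>exp (s/2) = exp 2 * exp (s/2 - 2)\<close> by simp
  thus ?thesis by simp
qed

lemma num_E2:
  fixes s :: real assumes s: "s \<ge> 21/4"
  shows "2 * exp (s/2) + 3 * s\<^sup>2 + 3/2 * s + 1 \<le> 6/5 * exp s"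
proof -
  define r where "r = s - 21/4"
  have r: "r \<ge> 0" using s by (simp add: r_def)
  have es: "exp s = exp (s/2) * exp (s/2)" by (simp flip: exp_add)
  have "12 * exp (s/2) \<le> exp (s/2) * exp (s/2)" using exp_half_ge[OF s] by (intro mult_right_mono) auto
  hence h: "2 * exp (s/2) \<le> exp s / 6" using es by simp
  have e: "exp s \<ge> 185 * (1 + r + r\<^sup>2 / 2)" using exp_ge_from_S[OF s] by (simp add: r_def)
  have eq: "185 * (1 + r + r\<^sup>2 / 2) - (3 * s\<^sup>2 + 3/2 * s + 1) = 179/2 * r\<^sup>2 + 152 * r + 1495/16"
    by (simp add: r_def power2_eq_square field_simps)
  have "179/2 * r\<^sup>2 + 152 * r + 1495/16 \<ge> 0" using r by simp
  hence "3 * s\<^sup>2 + 3/2 * s + 1 \<le> 185 * (1 + r + r\<^sup>2 / 2)" using eq by linarith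
  hence "3 * s\<^sup>2 + 3/2 * s + 1 \<le> exp s" using e by linarith
  thus ?thesis using h exp_ge_zero[of s] by linarith
qed

lemma num_E3:
  fixes s :: real assumes s: "s \<ge> 21/4"
  shows "4 * exp s \<le> s * (exp s - 14)"
proof -
  define r where "r = s - 21/4"
  have r: "r \<ge> 0" using s by (simp add: r_def)
  have "exp s \<ge> 185 * (1 + r + r\<^sup>2 / 2)" using exp_ge_from_S[OF s] by (simp add: r_def)
  moreover have "r\<^sup>2 / 2 \<ge> 0" by simp
  ultimately have e: "exp s \<ge> 185 * (1 + r)" by (smt (verit) mult_left_mono)
  have "exp s * (5/4 + r) \<ge> 185 * (1 + r) * (5/4 + r)" using e r by (intro mult_right_mono) auto
  moreover have eq: "185 * (1 + r) * (5/4 + r) - 14 * s = 185 * r\<^sup>2 + 1609/4 * r + 631/4"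
    by (simp add: r_def power2_eq_square field_simps)
  moreover have "185 * r\<^sup>2 + 1609/4 * r + 631/4 \<ge> 0" using r by simp
  moreover have "s * (exp s - 14) - 4 * exp s = exp s * (5/4 + r) - 14 * s" by (simp add: r_def algebra_simps)
  ultimately show ?thesis by linarith
qed

lemma Phi_small: "x \<le> 21/4 \<Longrightarrow> Phi x = 12 * x\<^sup>2" by (simp add: Phi_def)
lemma Phi_big: "x > 21/4 \<Longrightarrow> Phi x = 2 * (exp x - 1 - x)" by (simp add: Phi_def)
lemma Phi_le: "Phi x \<le> 2 * (exp x - 1 - x) + 12 * x\<^sup>2"
proof -
  have "exp x - 1 - x \<ge> 0" using exp_ge_add_one_self[of x] by linarith
  thus ?thesis by (simp add: Phi_def)
qed

lemma pw_E:
  fixes a b t c :: real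
  assumes a: "0 \<le> a" and ab: "a \<le> b" and t: "0 < t"
    and sS: "t * (a + b + 1) > 21/4" and ts: "t \<le> t * (a + b + 1) / 2"
    and cu: "c \<le> ((a + 1) - (b + 1))\<^sup>2 / ((a + 1) + (b + 1))"
  shows "exp (Phi (t * a) + Phi (t * b) + t * c - Phi (t * (a + b + 1)))
     \<le> exp ((t * (a + b + 1) + t) - t * (a + 1) * (exp (t * (a + b + 1)) - 14)) + exp (-1)"
proof -
  define s where "s = t * (a + b + 1)"
  define x where "x = t * a"
  define y where "y = t * b"
  define u where "u = t * (a + 1)"
  have sum: "x + y = s - t" by (simp add: x_def y_def s_def algebra_simps)
  have x0: "x \<ge> 0" using a t by (simp add: x_def)
  have xy: "x \<le> y" using ab t by (simp add: x_def y_def)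
  have sS': "s > 21/4" using sS by (simp add: s_def)
  have ts': "t \<le> s / 2" using ts by (simp add: s_def)
  have uxt: "u = x + t" by (simp add: u_def x_def algebra_simps)
  have yu: "y = s - u" using sum uxt by simp
  have "c \<le> (b + 1) - (a + 1)" using cQP[OF _ _ refl _ cu] a ab by simp
  hence "t * c \<le> t * (b - a)" using t by (intro mult_left_mono) auto
  hence tc: "t * c \<le> y - x" by (simp add: x_def y_def algebra_simps)
  have PhiS: "Phi s = 2 * (exp s - 1 - s)" using sS' by (rule Phi_big)
  have em1: "exp (-1::real) \<ge> 0" by simp
  have goal: "Phi x + Phi y + t * c - Phi s \<le> -1 \<or>
              Phi x + Phi y + t * c - Phi s \<le> (s + t) - u * (exp s - 14)"
  proof (cases "y \<le> 21/4")
    case True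
    have "x \<le> 21/4" using True xy by simp
    hence px: "Phi x = 12 * x\<^sup>2" by (rule Phi_small)
    have py: "Phi y = 12 * y\<^sup>2" using True by (rule Phi_small)
    have "x\<^sup>2 + y\<^sup>2 \<le> (x + y)\<^sup>2" using x0 xy by (simp add: power2_eq_square algebra_simps)
    also have "(x + y)\<^sup>2 \<le> s\<^sup>2" using sum x0 xy t by (intro power_mono) auto
    finally have "12 * x\<^sup>2 + 12 * y\<^sup>2 \<le> 12 * s\<^sup>2" by simp
    moreover have "y - x \<le> s" using sum x0 xy t by simp
    moreover have "12 * s\<^sup>2 + s + 1 \<le> 2 * (exp s - 1 - s)" using sS' by (intro num_E1) auto
    ultimately show ?thesis using px py tc PhiS by simp
  next
    case False
    have py: "Phi y = 2 * (exp y - 1 - y)" using False by (intro Phi_big) auto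
    have ey: "exp y = exp s * exp (- u)" using yu by (simp flip: exp_add)
    have base: "Phi x + Phi y + t * c - Phi s \<le> 2 * (exp x - 1 - x) + 12 * x\<^sup>2 + s + t - 2 * exp s * (1 - exp (- u))"
      using Phi_le[of x] py tc PhiS sum ey by (simp add: algebra_simps)
    show ?thesis
    proof (cases "u \<le> 1")
      case True
      have u0: "u \<ge> 0" using uxt x0 t by simp
      have x1: "x \<le> 1" using True uxt t by simp
      have "exp x \<le> 1 + x + x\<^sup>2" using exp_bound[OF x0 x1] .
      hence 1: "2 * (exp x - 1 - x) + 12 * x\<^sup>2 \<le> 14 * x\<^sup>2" by simp
      have "x\<^sup>2 \<le> x" using x0 x1 by (simp add: power2_eq_square mult_left_le)
      hence 2: "14 * x\<^sup>2 \<le> 14 * u" using uxt t by simp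
      have "exp (- u) \<le> 1 - u + u\<^sup>2 / 2" using exp_neg_le_quad[OF u0] .
      moreover have "u\<^sup>2 \<le> u" using u0 True by (simp add: power2_eq_square mult_left_le)
      ultimately have "1 - exp (- u) \<ge> u / 2" by simp
      hence "2 * exp s * (1 - exp (- u)) \<ge> 2 * exp s * (u / 2)" by (intro mult_left_mono) auto
      hence 3: "2 * exp s * (1 - exp (- u)) \<ge> exp s * u" by simp
      have "Phi x + Phi y + t * c - Phi s \<le> (s + t) - u * (exp s - 14)"
      proof -
        have "u * (exp s - 14) = exp s * u - 14 * u" by (simp add: algebra_simps)
        thus ?thesis using base 1 2 3 by linarith
      qed
      thus ?thesis by simp
    next
      case False
      have "exp (- u) \<le> exp (-1)" using False by simp
      also have "exp (-1::real) = 1 / exp 1" by (simp add: exp_minus field_simps)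
      also have "\<dots> \<le> 2/5" using e_ge_52 by (simp add: field_simps)
      finally have "1 - exp (- u) \<ge> 3/5" by simp
      hence "2 * exp s * (1 - exp (- u)) \<ge> 2 * exp s * (3/5)" by (intro mult_left_mono) auto
      hence 3: "2 * exp s * (1 - exp (- u)) \<ge> 6/5 * exp s" by simp
      have xs: "x \<le> s / 2" using sum xy t by simp
      have "exp x \<le> exp (s / 2)" using xs by simp
      moreover have "2 * (exp x - 1 - x) = 2 * exp x - 2 - 2 * x" by simp
      ultimately have 1: "2 * (exp x - 1 - x) \<le> 2 * exp (s/2)" using x0 by linarith
      have "x\<^sup>2 \<le> (s/2)\<^sup>2" using xs x0 by (intro power_mono) auto
      hence 2: "12 * x\<^sup>2 \<le> 3 * s\<^sup>2" by (simp add: power2_eq_square)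
      have "2 * exp (s/2) + 3 * s\<^sup>2 + 3/2 * s + 1 \<le> 6/5 * exp s" using sS' by (intro num_E2) auto
      hence "Phi x + Phi y + t * c - Phi s \<le> -1" using base 1 2 3 ts' by linarith
      thus ?thesis by simp
    qed
  qed
  have pos: "0 \<le> exp ((s + t) - u * (exp s - 14))" by simp
  from goal show ?thesis
  proof
    assume "Phi x + Phi y + t * c - Phi s \<le> -1"
    hence "exp (Phi x + Phi y + t * c - Phi s) \<le> exp (-1)" by simp
    thus ?thesis using pos unfolding x_def y_def s_def u_def by linarith
  next
    assume "Phi x + Phi y + t * c - Phi s \<le> (s + t) - u * (exp s - 14)"
    hence "exp (Phi x + Phi y + t * c - Phi s) \<le> exp ((s + t) - u * (exp s - 14))" by simp
    thus ?thesis using em1 unfolding x_def y_def s_def u_def by linarith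
  qed
qed

lemma e_le_27183: "exp 1 \<le> (27183/10000::real)"
  using e_approx_32 by (simp add: abs_if split: if_split_asm)

lemma exp_quarter_le: "exp (1/4::real) \<le> 128404/100000"
proof -
  have "exp (1/4::real) ^ 4 = exp 1" by (simp flip: exp_of_nat_mult)
  also have "\<dots> \<le> (128404/100000) ^ 4" using e_le_27183 by (simp add: power_divide)
  finally have h: "exp (1/4::real) ^ 4 \<le> (128404/100000) ^ 4" .
  show ?thesis using h by simp
qed

lemma exp_quarters_le: "exp (real k / 4) \<le> (128404/100000::real) ^ k"
proof -
  have "exp (real k / 4) = exp (1/4) ^ k" by (simp flip: exp_of_nat_mult)
  also have "\<dots> \<le> (128404/100000) ^ k" using exp_quarter_le by (intro power_mono) auto
  finally show ?thesis .
qed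

lemma q2_piece:
  fixes s a b U :: real
  assumes a8: "1/8 \<le> a" and as: "a \<le> s" and sb: "s \<le> b" and eb: "exp b \<le> U"
    and num: "2 * U / (a * (2 + 18 * a)) + 1 / (1 + 4 * a\<^sup>2 - a/2) \<le> 1"
  shows "2 * exp s / (s * (2 + 18 * s)) + exp (s/2 - 4 * s\<^sup>2) \<le> 1"
proof -
  have a0: "a > 0" using a8 by simp
  have es: "exp s \<le> U" using sb eb by (meson exp_le_cancel_iff order.trans)
  have den: "a * (2 + 18 * a) \<le> s * (2 + 18 * s)" using as a0 by (intro mult_mono) auto
  have den0: "a * (2 + 18 * a) > 0" using a0 by simp
  have 1: "2 * exp s / (s * (2 + 18 * s)) \<le> 2 * U / (a * (2 + 18 * a))"
  proof -
    have U0: "U \<ge> 0" using es exp_gt_zero[of s] by linarith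
    show ?thesis using es den den0 U0 by (intro frac_le) auto
  qed
  have "(s - a) * (4 * (s + a) - 1/2) \<ge> 0" using as a8 by (intro mult_nonneg_nonneg) auto
  moreover have "(s - a) * (4 * (s + a) - 1/2) = (4 * s\<^sup>2 - s/2) - (4 * a\<^sup>2 - a/2)"
    by (simp add: power2_eq_square field_simps)
  ultimately have m: "4 * s\<^sup>2 - s/2 \<ge> 4 * a\<^sup>2 - a/2" by linarith
  have m0: "4 * a\<^sup>2 - a/2 \<ge> 0"
  proof -
    have "a * (4 * a - 1/2) \<ge> 0" using a8 by (intro mult_nonneg_nonneg) auto
    thus ?thesis by (simp add: power2_eq_square algebra_simps)
  qed
  have "exp (s/2 - 4 * s\<^sup>2) = 1 / exp (4 * s\<^sup>2 - s/2)" by (simp add: exp_diff exp_minus field_simps flip: exp_add)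
  also have "\<dots> \<le> 1 / (1 + (4 * s\<^sup>2 - s/2))"
    using m m0 by (intro divide_left_mono) auto
  also have "\<dots> \<le> 1 / (1 + 4 * a\<^sup>2 - a/2)"
    using m m0 by (intro divide_left_mono) auto
  finally show ?thesis using 1 num by linarith
qed

lemma q2_num:
  fixes s :: real assumes "2/3 \<le> s" "s \<le> 21/4"
  shows "2 * exp s / (s * (2 + 18 * s)) + exp (s/2 - 4 * s\<^sup>2) \<le> 1"
proof -
  have E: "exp (real k / 4) \<le> (128404/100000::real) ^ k" for k by (rule exp_quarters_le)
  consider "s \<le> 3/4" | "3/4 \<le> s" "s \<le> 5/4" | "5/4 \<le> s" "s \<le> 5/2" | "5/2 \<le> s" "s \<le> 4"
    | "4 \<le> s" "s \<le> 19/4" | "19/4 \<le> s" by linarith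
  thus ?thesis
  proof cases
    case 1 show ?thesis
      by (rule q2_piece[of "2/3" s "real 3 / 4" "(128404/100000) ^ 3"]) (use assms 1 E[of 3] in \<open>auto simp: power_divide power2_eq_square\<close>)
  next
    case 2 show ?thesis
      by (rule q2_piece[of "3/4" s "real 5 / 4" "(128404/100000) ^ 5"]) (use assms 2 E[of 5] in \<open>auto simp: power_divide power2_eq_square\<close>)
  next
    case 3 show ?thesis
      by (rule q2_piece[of "5/4" s "real 10 / 4" "(128404/100000) ^ 10"]) (use assms 3 E[of 10] in \<open>auto simp: power_divide power2_eq_square\<close>)
  next
    case 4 show ?thesis
      by (rule q2_piece[of "5/2" s "real 16 / 4" "(128404/100000) ^ 16"]) (use assms 4 E[of 16] in \<open>auto simp: power_divide power2_eq_square\<close>)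
  next
    case 5 show ?thesis
      by (rule q2_piece[of "4" s "real 19 / 4" "(128404/100000) ^ 19"]) (use assms 5 E[of 19] in \<open>auto simp: power_divide power2_eq_square\<close>)
  next
    case 6 show ?thesis
      by (rule q2_piece[of "19/4" s "real 21 / 4" "(128404/100000) ^ 21"]) (use assms 6 E[of 21] in \<open>auto simp: power_divide power2_eq_square\<close>)
  qed
qed

lemma geo_tail:
  fixes k A X :: real
  assumes k: "k > 0" and AX: "A - k/2 \<le> X"
  shows "2 * exp A / (exp k - 1) \<le> 2 * exp X / k"
proof -
  have h: "k * exp (k/2) \<le> exp k - 1" using exp_sinh_bound k by simp
  have p: "k * exp (k/2) > 0" using k by simp
  have "2 * exp A / (exp k - 1) \<le> 2 * exp A / (k * exp (k/2))"
    using h p k by (intro divide_left_mono) (auto intro!: mult_pos_pos)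
  also have "\<dots> = 2 * exp (A - k/2) / k"
  proof -
    have "exp A = exp (A - k/2) * exp (k/2)" by (simp flip: exp_add)
    thus ?thesis using k by (simp add: field_simps)
  qed
  also have "\<dots> \<le> 2 * exp X / k" using AX k by (intro divide_right_mono) auto
  finally show ?thesis .
qed

locale cbounds =
  fixes n :: nat and c :: "nat \<Rightarrow> real"
  assumes cu: "\<And>a. a < n \<Longrightarrow> c a \<le> ((real a + 1) - (real n - real a))\<^sup>2 / (real n + 1)"
    and cl: "\<And>a. a < n \<Longrightarrow> - 2 * (real a + 1) * (real n - real a) / (real n + 1) \<le> c a"
    and csym: "\<And>a. a < n \<Longrightarrow> c (n - 1 - a) = c a"
    and csum: "(\<Sum>a<n. c a) = 0"
begin

lemma PQ_of:
  assumes "a < n"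
  shows "1 \<le> real a + 1" "1 \<le> real n - real a" "real n + 1 = (real a + 1) + (real n - real a)"
    "real (n - 1 - a) = real n - real a - 1"
  using assms by (auto simp: of_nat_diff)

lemma sq_ident:
  assumes "a < n"
  shows "(x * real a)\<^sup>2 + (x * real (n - 1 - a))\<^sup>2 - (x * real n)\<^sup>2
          = - (x\<^sup>2 * (2 * (real a + 1) * (real n - real a) - 1))"
  using assms by (simp add: of_nat_diff power2_eq_square algebra_simps)

lemma step_lower:
  assumes r: "r > 0" and n: "n \<ge> 1"
  shows "(\<Sum>a<n. exp (12 * (r * real a)\<^sup>2 + 12 * (r * real (n - 1 - a))\<^sup>2 + (- r) * c a))
           \<le> real n * exp (12 * (r * real n)\<^sup>2)"
proof -
  define y where "y a = 12 * (r * real a)\<^sup>2 + 12 * (r * real (n - 1 - a))\<^sup>2 + (- r) * c a - 12 * (r * real n)\<^sup>2" for a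
  define b where "b = (1 - exp (- (r * (real n + 1)))) / (r * (real n + 1))"
  have "(\<Sum>a<n. exp (y a)) \<le> real n"
  proof (rule weight_sum[where z = "\<lambda>a. - r * c a" and b = b])
    fix a assume a: "a < n"
    note pq = PQ_of[OF a]
    have "y a = - r * c a - 12 * r\<^sup>2 * (2 * (real a + 1) * (real n - real a) - 1)"
      using sq_ident[OF a, of r] by (simp add: y_def algebra_simps)
    also have "exp \<dots> \<le> 1 + b * (- r * c a)"
      unfolding b_def by (rule pw_lower[OF pq(1) pq(2) pq(3) r cu[OF a] cl[OF a]])
    finally show "exp (y a) \<le> 1 + b * (- r * c a)" .
  next
    have "(\<Sum>a<n. - r * c a) = (- r) * (\<Sum>a<n. c a)" by (simp add: sum_distrib_left)
    thus "(\<Sum>a<n. - r * c a) = 0" using csum by simp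
  qed
  moreover have "(\<Sum>a<n. exp (12 * (r * real a)\<^sup>2 + 12 * (r * real (n - 1 - a))\<^sup>2 + (- r) * c a))
      = (\<Sum>a<n. exp (y a)) * exp (12 * (r * real n)\<^sup>2)"
    by (simp add: y_def sum_distrib_right flip: exp_add)
  ultimately show ?thesis by (simp add: mult_right_mono)
qed


lemma sym_pw:
  fixes y :: "nat \<Rightarrow> real" and F :: "real \<Rightarrow> real" and B :: real
  assumes half: "\<And>a. a < n \<Longrightarrow> real a \<le> real (n - 1 - a) \<Longrightarrow> exp (y a) \<le> F (real a + 1) + B"
    and ysym: "\<And>a. a < n \<Longrightarrow> y (n - 1 - a) = y a"
    and F0: "\<And>x. F x \<ge> 0"
  shows "\<And>a. a < n \<Longrightarrow> exp (y a) \<le> F (real a + 1) + F (real n - real a) + B"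
proof -
  fix a assume a: "a < n"
  show "exp (y a) \<le> F (real a + 1) + F (real n - real a) + B"
  proof (cases "real a \<le> real (n - 1 - a)")
    case True
    thus ?thesis using half[OF a True] F0[of "real n - real a"] by linarith
  next
    case False
    define a' where "a' = n - 1 - a"
    have a': "a' < n" using a by (simp add: a'_def)
    have aa: "n - 1 - a' = a" using a by (simp add: a'_def)
    have "real a' \<le> real (n - 1 - a')" using False aa a by (simp add: a'_def)
    hence "exp (y a') \<le> F (real a' + 1) + B" using half[OF a'] by simp
    moreover have "y a' = y a" using ysym[OF a] by (simp add: a'_def)
    moreover have "real a' + 1 = real n - real a" using a by (simp add: a'_def of_nat_diff)
    ultimately show ?thesis using F0[of "real a + 1"] by simp
  qed
qed

definition yU :: "real \<Rightarrow> nat \<Rightarrow> real" where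
  "yU t a = Phi (t * real a) + Phi (t * real (n - 1 - a)) + t * c a - Phi (t * real n)"

lemma yU_sym: "a < n \<Longrightarrow> yU t (n - 1 - a) = yU t a"
  using csym[of a] by (simp add: yU_def algebra_simps)

lemma upper_E:
  assumes t: "t > 0" and n: "n \<ge> 2" and sS: "t * real n > 21/4"
  shows "(\<Sum>a<n. exp (yU t a)) \<le> real n"
proof -
  define s where "s = t * real n"
  define A where "A = s + t"
  define k where "k = t * (exp s - 14)"
  have sS': "s > 21/4" using sS by (simp add: s_def)
  have es: "exp s \<ge> 185" using exp_ge_from_S[of s] sS' by (smt (verit) zero_le_power2 divide_nonneg_nonneg)
  have k0: "k > 0" using t es by (simp add: k_def)
  have "(\<Sum>a<n. exp (yU t a)) \<le> 2 * exp A / (exp k - 1) + real n * exp (-1)"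
  proof (rule geo_sum[OF k0])
    fix a assume a: "a < n"
    let ?F = "\<lambda>x. exp (A - k * x)"
    have "exp (yU t a) \<le> ?F (real a + 1) + ?F (real n - real a) + exp (-1)"
    proof (rule sym_pw[where y = "yU t", OF _ yU_sym _ a])
      fix a assume a: "a < n" and ab: "real a \<le> real (n - 1 - a)"
      have nn: "real a + real (n - 1 - a) + 1 = real n" using a by (simp add: of_nat_diff)
      have cu': "c a \<le> ((real a + 1) - (real (n - 1 - a) + 1))\<^sup>2 / ((real a + 1) + (real (n - 1 - a) + 1))"
        using cu[OF a] a by (simp add: of_nat_diff algebra_simps)
      have ts: "t \<le> t * (real a + real (n - 1 - a) + 1) / 2" using nn n t by simp
      have "exp (Phi (t * real a) + Phi (t * real (n - 1 - a)) + t * c a - Phi (t * (real a + real (n - 1 - a) + 1)))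
        \<le> exp ((t * (real a + real (n - 1 - a) + 1) + t) - t * (real a + 1) * (exp (t * (real a + real (n - 1 - a) + 1)) - 14)) + exp (-1)"
        by (rule pw_E[OF _ ab t _ ts cu']) (use sS nn in auto)
      thus "exp (yU t a) \<le> ?F (real a + 1) + exp (-1)"
        unfolding nn by (simp add: yU_def A_def k_def s_def algebra_simps)
    qed auto
    thus "exp (yU t a) \<le> exp (A - k * (real a + 1)) + exp (A - k * (real n - real a)) + exp (-1)" by simp
  qed
  also have "2 * exp A / (exp k - 1) \<le> 2 * exp s / k"
  proof (rule geo_tail[OF k0])
    have "2 * t \<le> k" using t es by (simp add: k_def)
    thus "A - k/2 \<le> s" by (simp add: A_def)
  qed
  also have "2 * exp s / k \<le> real n / 2"
  proof -
    have "4 * exp s \<le> s * (exp s - 14)" using sS' by (intro num_E3) auto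
    moreover have "(s / (2 * t)) * k = s * (exp s - 14) / 2" using t by (simp add: k_def field_simps)
    ultimately have "2 * exp s \<le> (s / (2 * t)) * k" by linarith
    hence "2 * exp s / k \<le> s / (2 * t)" by (rule mult_imp_div_pos_le[OF k0])
    thus ?thesis using t by (simp add: s_def)
  qed
  finally have "(\<Sum>a<n. exp (yU t a)) \<le> real n / 2 + real n * exp (-1)" by simp
  also have "\<dots> \<le> real n"
  proof -
    have "exp (-1::real) \<le> 1/2" using e_ge_52 by (simp add: exp_minus field_simps)
    hence "real n * exp (-1) \<le> real n * (1/2)" by (intro mult_left_mono) auto
    thus ?thesis by simp
  qed
  finally show ?thesis .
qed

lemma yU_quad:
  assumes t: "t > 0" and sS: "t * real n \<le> 21/4" and a: "a < n"
  shows "yU t a = t * c a - 12 * t\<^sup>2 * (2 * (real a + 1) * (real n - real a) - 1)"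
proof -
  have "t * real a \<le> t * real n" using t a by (intro mult_left_mono) auto
  hence 1: "Phi (t * real a) = 12 * (t * real a)\<^sup>2" using sS by (intro Phi_small) auto
  have "t * real (n - 1 - a) \<le> t * real n" using t a by (intro mult_left_mono) auto
  hence 2: "Phi (t * real (n - 1 - a)) = 12 * (t * real (n - 1 - a))\<^sup>2" using sS by (intro Phi_small) auto
  have 3: "Phi (t * real n) = 12 * (t * real n)\<^sup>2" using sS by (intro Phi_small) auto
  show ?thesis using sq_ident[OF a, of t] unfolding yU_def 1 2 3 by (simp add: algebra_simps)
qed

lemma upper_Q1:
  assumes t: "t > 0" and sS: "t * real n \<le> 21/4" and sm: "t * (real n + 1) \<le> 3/4"
  shows "(\<Sum>a<n. exp (yU t a)) \<le> real n"
proof (rule weight_sum[where z = "\<lambda>a. t * c a" and b = "(exp (t * (real n + 1)) - 1) / (t * (real n + 1))"])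
  fix a assume a: "a < n"
  note pq = PQ_of[OF a]
  show "exp (yU t a) \<le> 1 + (exp (t * (real n + 1)) - 1) / (t * (real n + 1)) * (t * c a)"
    unfolding yU_quad[OF t sS a] by (rule pw_Q1[OF pq(1) pq(2) pq(3) t sm cu[OF a] cl[OF a]])
next
  have "(\<Sum>a<n. t * c a) = t * (\<Sum>a<n. c a)" by (simp add: sum_distrib_left)
  thus "(\<Sum>a<n. t * c a) = 0" using csum by simp
qed

lemma upper_Q2a:
  assumes t: "t > 0" and sS: "t * real n \<le> 21/4" and sm: "t * (real n + 1) \<ge> 3/4"
    and n19: "n \<le> 19"
  shows "(\<Sum>a<n. exp (yU t a)) \<le> real n"
proof -
  have "(\<Sum>a<n. exp (yU t a)) \<le> (\<Sum>a<n. 1)"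
  proof (intro sum_mono)
    fix a assume "a \<in> {..<n}"
    hence a: "a < n" by simp
    note pq = PQ_of[OF a]
    have "yU t a \<le> 0" unfolding yU_quad[OF t sS a]
      by (rule pw_Q2a[OF pq(1) pq(2) pq(3) t _ sm cu[OF a]]) (use n19 in simp)
    thus "exp (yU t a) \<le> 1" by simp
  qed
  thus ?thesis by simp
qed

lemma upper_Q2b:
  assumes t: "t > 0" and sS: "t * real n \<le> 21/4" and sm: "t * (real n + 1) \<ge> 3/4"
    and n20: "n \<ge> 20"
  shows "(\<Sum>a<n. exp (yU t a)) \<le> real n"
proof -
  define s where "s = t * real n"
  define s' where "s' = t * (real n + 1)"
  define A where "A = s' + 12 * t\<^sup>2"
  define k where "k = t * (2 + 18 * s')"
  define B where "B = exp (s' / 2 - 4 * s'\<^sup>2)"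
  have ss': "s' = s + t" by (simp add: s_def s'_def algebra_simps)
  have s'0: "s' > 0" using t by (simp add: s'_def)
  have k0: "k > 0" using t s'0 by (simp add: k_def)
  have s23: "2/3 \<le> s"
  proof -
    have "s * (real n + 1) = s' * real n" by (simp add: s_def s'_def algebra_simps)
    moreover have "s' * real n \<ge> 3/4 * real n" using sm by (intro mult_right_mono) (auto simp: s'_def)
    moreover have "3/4 * real n \<ge> 2/3 * (real n + 1)" using n20 by simp
    ultimately have "2/3 * (real n + 1) \<le> s * (real n + 1)" by linarith
    moreover have "real n + 1 > 0" by simp
    ultimately show "2/3 \<le> s" by (meson mult_le_cancel_right_pos)
  qed
  have "(\<Sum>a<n. exp (yU t a)) \<le> 2 * exp A / (exp k - 1) + real n * B"
  proof (rule geo_sum[OF k0])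
    fix a assume a: "a < n"
    let ?F = "\<lambda>x. exp (A - k * x)"
    have "exp (yU t a) \<le> ?F (real a + 1) + ?F (real n - real a) + B"
    proof (rule sym_pw[where y = "yU t", OF _ yU_sym _ a])
      fix a assume a: "a < n" and ab: "real a \<le> real (n - 1 - a)"
      note pq = PQ_of[OF a]
      have PQ: "real a + 1 \<le> real n - real a" using ab pq by simp
      have B0: "B \<ge> 0" by (simp add: B_def)
      show "exp (yU t a) \<le> ?F (real a + 1) + B"
      proof (cases "real a + 1 \<le> (real n + 1) / 4")
        case True
        have "yU t a \<le> (t * (real n + 1) + 12 * t\<^sup>2) - (real a + 1) * (t * (2 + 18 * (t * (real n + 1))))"
          unfolding yU_quad[OF t sS a] by (rule pw_Q2b_edge[OF pq(1) pq(2) pq(3) t True cu[OF a]])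
        hence "yU t a \<le> A - k * (real a + 1)" by (simp add: A_def k_def s'_def algebra_simps)
        hence "exp (yU t a) \<le> ?F (real a + 1)" by simp
        thus ?thesis using B0 by linarith
      next
        case False
        have "yU t a \<le> t * (real n + 1) / 2 - 4 * (t * (real n + 1))\<^sup>2"
          unfolding yU_quad[OF t sS a]
          by (rule pw_Q2b_bulk[OF pq(1) pq(2) pq(3) t PQ _ _ cu[OF a]]) (use False n20 in auto)
        hence "exp (yU t a) \<le> B" by (simp add: B_def s'_def)
        moreover have "?F (real a + 1) \<ge> 0" by simp
        ultimately show ?thesis by linarith
      qed
    qed auto
    thus "exp (yU t a) \<le> exp (A - k * (real a + 1)) + exp (A - k * (real n - real a)) + B" by simp
  qed
  also have "2 * exp A / (exp k - 1) \<le> 2 * exp s / k"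
  proof (rule geo_tail[OF k0])
    have "21 * t \<le> s'" using n20 t by (simp add: s'_def)
    hence "12 * t\<^sup>2 \<le> 9 * t * s'" using t by (simp add: power2_eq_square)
    thus "A - k/2 \<le> s" using ss' by (simp add: A_def k_def algebra_simps)
  qed
  also have "2 * exp s / k \<le> real n * (2 * exp s / (s * (2 + 18 * s)))"
  proof -
    have s0: "s > 0" using t n20 by (simp add: s_def)
    have "t * (2 + 18 * s) \<le> k" using t ss' by (simp add: k_def)
    hence "2 * exp s / k \<le> 2 * exp s / (t * (2 + 18 * s))" using t s0 k0 by (intro divide_left_mono) auto
    also have "t * (2 + 18 * s) = s * (2 + 18 * s) / real n" using n20 by (simp add: s_def)
    also have "2 * exp s / (s * (2 + 18 * s) / real n) = real n * (2 * exp s / (s * (2 + 18 * s)))"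
      by (simp add: divide_divide_eq_right mult.commute)
    finally show ?thesis .
  qed
  also have "B \<le> exp (s / 2 - 4 * s\<^sup>2)"
  proof -
    have s16: "s \<ge> 1/16" using s23 by simp
    have "(s' - s) * (1/2 - 4 * (s' + s)) \<le> 0" using ss' t s16 by (intro mult_nonneg_nonpos) auto
    moreover have "(s' - s) * (1/2 - 4 * (s' + s)) = (s' / 2 - 4 * s'\<^sup>2) - (s / 2 - 4 * s\<^sup>2)"
      by (simp add: power2_eq_square field_simps)
    ultimately show ?thesis by (simp add: B_def)
  qed
  hence "real n * B \<le> real n * exp (s / 2 - 4 * s\<^sup>2)" by (intro mult_left_mono) auto
  hence "real n * (2 * exp s / (s * (2 + 18 * s))) + real n * B
      \<le> real n * (2 * exp s / (s * (2 + 18 * s)) + exp (s / 2 - 4 * s\<^sup>2))" by (simp add: algebra_simps)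
  also have "\<dots> \<le> real n * 1"
  proof (intro mult_left_mono q2_num)
    show "2/3 \<le> s" by (rule s23)
    show "s \<le> 21/4" using sS by (simp add: s_def)
  qed auto
  finally show ?thesis by simp
qed

lemma step_upper:
  assumes t: "t > 0" and n: "n \<ge> 2"
  shows "(\<Sum>a<n. exp (Phi (t * real a) + Phi (t * real (n - 1 - a)) + t * c a))
           \<le> real n * exp (Phi (t * real n))"
proof -
  have main: "(\<Sum>a<n. exp (yU t a)) \<le> real n"
  proof (cases "t * real n > 21/4")
    case True thus ?thesis using upper_E[OF t n] by simp
  next
    case False
    hence sS: "t * real n \<le> 21/4" by simp
    show ?thesis
    proof (cases "t * (real n + 1) \<le> 3/4")
      case True thus ?thesis using upper_Q1[OF t sS] by simp
    next
      case False
      hence sm: "t * (real n + 1) \<ge> 3/4" by simp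
      show ?thesis
      proof (cases "n \<le> 19")
        case True thus ?thesis using upper_Q2a[OF t sS sm] by simp
      next
        case False thus ?thesis using upper_Q2b[OF t sS sm] by simp
      qed
    qed
  qed
  have "(\<Sum>a<n. exp (Phi (t * real a) + Phi (t * real (n - 1 - a)) + t * c a))
      = (\<Sum>a<n. exp (yU t a)) * exp (Phi (t * real n))"
    by (simp add: yU_def sum_distrib_right flip: exp_add)
  with main show ?thesis by (simp add: mult_right_mono)
qed

end

lemma qs_upto_length: "length (qs_upto n) = Suc n"
  by (induction n) (simp_all add: Let_def)

lemma qs_upto_nth: "k \<le> n \<Longrightarrow> qs_upto n ! k = qs_pmf k"
proof (induction n arbitrary: k)
  case 0 thus ?case by (simp add: qs_pmf_def)
next
  case (Suc m)
  show ?case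
  proof (cases "k = Suc m")
    case True thus ?thesis by (simp add: qs_pmf_def)
  next
    case False
    hence "k \<le> m" using Suc.prems by simp
    hence "qs_upto (Suc m) ! k = qs_upto m ! k"
      by (simp add: Let_def nth_append qs_upto_length)
    thus ?thesis using Suc.IH[OF \<open>k \<le> m\<close>] by simp
  qed
qed

lemma qs_pmf_0: "qs_pmf 0 = return_pmf 0"
  by (simp add: qs_pmf_def)

lemma qs_pmf_Suc:
  "qs_pmf (Suc m) = pmf_of_set {1..Suc m} \<bind>
     (\<lambda>u. qs_pmf (u - 1) \<bind> (\<lambda>a. qs_pmf (Suc m - u) \<bind> (\<lambda>b. return_pmf (a + b + m))))"
proof -
  have "qs_pmf (Suc m) = pmf_of_set {1..Suc m} \<bind>
             (\<lambda>u. (qs_upto m ! (u - 1)) \<bind>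
               (\<lambda>a. (qs_upto m ! (Suc m - u)) \<bind>
                 (\<lambda>b. return_pmf (a + b + m))))"
    by (simp add: qs_pmf_def Let_def nth_append qs_upto_length)
  also have "\<dots> = pmf_of_set {1..Suc m} \<bind>
     (\<lambda>u. qs_pmf (u - 1) \<bind> (\<lambda>a. qs_pmf (Suc m - u) \<bind> (\<lambda>b. return_pmf (a + b + m))))"
  proof (rule bind_pmf_cong[OF refl])
    fix u assume "u \<in> set_pmf (pmf_of_set {1..Suc m})"
    hence u: "1 \<le> u" "u \<le> Suc m" by auto
    show "(qs_upto m ! (u - 1)) \<bind> (\<lambda>a. (qs_upto m ! (Suc m - u)) \<bind> (\<lambda>b. return_pmf (a + b + m)))
        = qs_pmf (u - 1) \<bind> (\<lambda>a. qs_pmf (Suc m - u) \<bind> (\<lambda>b. return_pmf (a + b + m)))"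
      using u by (simp add: qs_upto_nth)
  qed
  finally show ?thesis .
qed

lemma qs_pmf_finite: "finite (set_pmf (qs_pmf n))"
proof (induction n rule: less_induct)
  case (less n)
  show ?case
  proof (cases n)
    case 0 thus ?thesis by (simp add: qs_pmf_0)
  next
    case (Suc m)
    have "finite (\<Union>u\<in>{1..Suc m}. \<Union>a\<in>set_pmf (qs_pmf (u - 1)). \<Union>b\<in>set_pmf (qs_pmf (Suc m - u)). {a + b + m})"
      using less.IH Suc by (intro finite_UN_I) auto
    thus ?thesis unfolding Suc qs_pmf_Suc by (simp add: set_bind_pmf)
  qed
qed

lemma expectation_bind_finite:
  fixes h :: "'b \<Rightarrow> real"
  assumes "finite (set_pmf p)" "\<And>x. x \<in> set_pmf p \<Longrightarrow> finite (set_pmf (f x))"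
  shows "measure_pmf.expectation (p \<bind> f) h = measure_pmf.expectation p (\<lambda>x. measure_pmf.expectation (f x) h)"
proof -
  have "measure_pmf.expectation (p \<bind> f) h = (\<Sum>a\<in>set_pmf p. pmf p a *\<^sub>R measure_pmf.expectation (f a) h)"
    using assms by (intro pmf_expectation_bind) auto
  also have "\<dots> = measure_pmf.expectation p (\<lambda>x. measure_pmf.expectation (f x) h)"
    using assms by (subst integral_measure_pmf[of "set_pmf p"]) auto
  finally show ?thesis .
qed

definition GG :: "nat \<Rightarrow> real \<Rightarrow> real" where
  "GG n t = measure_pmf.expectation (qs_pmf n) (\<lambda>k. exp (t * (real k - qs_mean n)))"

definition cc :: "nat \<Rightarrow> nat \<Rightarrow> real" where
  "cc n a = real n - 1 + qs_mean a + qs_mean (n - 1 - a) - qs_mean n"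

lemma GG_nonneg: "GG n t \<ge> 0"
  unfolding GG_def by (intro integral_nonneg_AE) auto

lemma qs_mean_0: "qs_mean 0 = 0" by (simp add: qs_mean_def harm_def)

lemma GG_0: "GG 0 t = 1"
  by (simp add: GG_def qs_pmf_0 qs_mean_0)

lemma GG_rec:
  assumes "n \<ge> 1"
  shows "GG n t = (\<Sum>a<n. GG a t * GG (n - 1 - a) t * exp (t * cc n a)) / real n"
proof -
  obtain m where m: "n = Suc m" using assms by (cases n) auto
  let ?h = "\<lambda>k. exp (t * (real k - qs_mean n))"
  have inner: "measure_pmf.expectation (qs_pmf (u - 1) \<bind> (\<lambda>a. qs_pmf (Suc m - u) \<bind> (\<lambda>b. return_pmf (a + b + m)))) ?h
      = GG (u - 1) t * GG (Suc m - u) t * exp (t * (real m + qs_mean (u - 1) + qs_mean (Suc m - u) - qs_mean n))" for u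
  proof -
    let ?i = "u - 1" and ?j = "Suc m - u"
    have "measure_pmf.expectation (qs_pmf ?i \<bind> (\<lambda>a. qs_pmf ?j \<bind> (\<lambda>b. return_pmf (a + b + m)))) ?h
        = measure_pmf.expectation (qs_pmf ?i) (\<lambda>a. measure_pmf.expectation (qs_pmf ?j) (\<lambda>b. ?h (a + b + m)))"
      by (subst expectation_bind_finite) (auto simp: qs_pmf_finite expectation_bind_finite)
    also have "\<dots> = measure_pmf.expectation (qs_pmf ?i) (\<lambda>a. exp (t * (real a - qs_mean ?i)) *
                     (exp (t * (real m + qs_mean ?i + qs_mean ?j - qs_mean n)) * GG ?j t))"
    proof (intro Bochner_Integration.integral_cong refl)
      fix a
      have "(\<lambda>b. ?h (a + b + m)) = (\<lambda>b. exp (t * (real b - qs_mean ?j)) *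
              (exp (t * (real a - qs_mean ?i)) * exp (t * (real m + qs_mean ?i + qs_mean ?j - qs_mean n))))"
        by (rule ext) (simp add: algebra_simps flip: exp_add)
      hence "measure_pmf.expectation (qs_pmf ?j) (\<lambda>b. ?h (a + b + m))
          = GG ?j t * (exp (t * (real a - qs_mean ?i)) * exp (t * (real m + qs_mean ?i + qs_mean ?j - qs_mean n)))"
        by (simp add: GG_def)
      thus "measure_pmf.expectation (qs_pmf ?j) (\<lambda>b. ?h (a + b + m)) = exp (t * (real a - qs_mean ?i)) *
                     (exp (t * (real m + qs_mean ?i + qs_mean ?j - qs_mean n)) * GG ?j t)"
        by (simp add: algebra_simps)
    qed
    also have "\<dots> = GG ?i t * (exp (t * (real m + qs_mean ?i + qs_mean ?j - qs_mean n)) * GG ?j t)"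
      by (simp add: GG_def)
    finally show ?thesis by (simp add: algebra_simps)
  qed
  have "GG n t = measure_pmf.expectation (pmf_of_set {1..Suc m}) (\<lambda>u.
      measure_pmf.expectation (qs_pmf (u - 1) \<bind> (\<lambda>a. qs_pmf (Suc m - u) \<bind> (\<lambda>b. return_pmf (a + b + m)))) ?h)"
    unfolding GG_def m qs_pmf_Suc
    by (subst expectation_bind_finite) (auto simp: qs_pmf_finite set_bind_pmf intro!: finite_UN_I)
  also have "\<dots> = (\<Sum>u\<in>{1..Suc m}. measure_pmf.expectation (qs_pmf (u - 1) \<bind> (\<lambda>a. qs_pmf (Suc m - u) \<bind> (\<lambda>b. return_pmf (a + b + m)))) ?h) / real (card {1..Suc m})"
    by (subst integral_pmf_of_set) auto
  also have "\<dots> = (\<Sum>u\<in>{1..Suc m}. GG (u - 1) t * GG (Suc m - u) t * exp (t * (real m + qs_mean (u - 1) + qs_mean (Suc m - u) - qs_mean n))) / real (Suc m)"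
    by (simp only: inner card_atLeastAtMost) simp
  also have "(\<Sum>u\<in>{1..Suc m}. GG (u - 1) t * GG (Suc m - u) t * exp (t * (real m + qs_mean (u - 1) + qs_mean (Suc m - u) - qs_mean n)))
      = (\<Sum>a<n. GG a t * GG (n - 1 - a) t * exp (t * cc n a))"
  proof -
    have "(\<Sum>u\<in>{1..Suc m}. GG (u - 1) t * GG (Suc m - u) t * exp (t * (real m + qs_mean (u - 1) + qs_mean (Suc m - u) - qs_mean n)))
        = (\<Sum>a\<in>{0..m}. GG a t * GG (m - a) t * exp (t * (real m + qs_mean a + qs_mean (m - a) - qs_mean n)))"
      unfolding One_nat_def sum.shift_bounds_cl_Suc_ivl by simp
    also have "{0..m} = {..<n}" using m by auto
    finally show ?thesis using m by (simp add: cc_def)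
  qed
  finally show ?thesis using m by simp
qed

lemma harm_diff_lower:
  "(harm (p + d) - harm p :: real) \<ge> real d / (real p + real d)"
proof (induction d)
  case 0 thus ?case by simp
next
  case (Suc d)
  have eq: "harm (p + Suc d) - harm p = (harm (p + d) - harm p) + 1 / (real p + real d + 1 :: real)"
    by (simp add: harm_Suc field_simps)
  have le: "real d / (real p + real d + 1) \<le> real d / (real p + real d)"
  proof (cases "real p + real d = 0")
    case True thus ?thesis by simp
  next
    case False thus ?thesis by (intro divide_left_mono) auto
  qed
  have sp: "real (Suc d) / (real p + real (Suc d)) = real d / (real p + real d + 1) + 1 / (real p + real d + 1)"
    by (simp add: add_divide_distrib[symmetric] add_ac)
  show ?case using eq le sp Suc.IH by linarith
qed

lemma harm_diff_upper_gen:
  fixes m p d :: nat assumes p: "1 \<le> p" and pm: "p + d \<le> m"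
  shows "(harm (p + d) - harm p :: real)
    \<le> (real m / (2 * real p) - real p / (2 * real m)) - (real m / (2 * (real p + real d)) - (real p + real d) / (2 * real m))"
  using pm
proof (induction d)
  case 0 thus ?case by simp
next
  case (Suc d)
  define k where "k = real p + real d"
  have k1: "k \<ge> 1" using p by (simp add: k_def)
  have mk: "real m \<ge> k + 1" using Suc.prems by (simp add: k_def)
  have IH: "harm (p + d) - harm p \<le> (real m / (2 * real p) - real p / (2 * real m)) - (real m / (2 * k) - k / (2 * real m))"
    using Suc by (simp add: k_def)
  have step: "1 / (k + 1) \<le> (real m / (2 * k) - k / (2 * real m)) - (real m / (2 * (k + 1)) - (k + 1) / (2 * real m))"
  proof -
    have m0: "real m > 0" using mk k1 by simp
    have nn: "((real m - k)\<^sup>2 + k) / (2 * real m * k * (k + 1)) \<ge> 0" using k1 m0 by simp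
    have "(real m / (2 * k) - k / (2 * real m)) - (real m / (2 * (k + 1)) - (k + 1) / (2 * real m)) - 1 / (k + 1)
        = ((real m - k)\<^sup>2 + k) / (2 * real m * k * (k + 1))"
    proof -
      have "k > 0" "real m > 0" using m0 k1 by auto
      thus ?thesis by (simp add: divide_simps) (simp add: algebra_simps power2_eq_square)
    qed
    thus ?thesis using nn by linarith
  qed
  have "harm (p + Suc d) - harm p = (harm (p + d) - harm p) + 1 / (k + 1 :: real)"
    by (simp add: harm_Suc k_def field_simps)
  also have "\<dots> \<le> (real m / (2 * real p) - real p / (2 * real m)) - (real m / (2 * (k + 1)) - (k + 1) / (2 * real m))"
    using IH step by linarith
  finally show ?case by (simp add: k_def add_ac)
qed

lemma harm_diff_upper:
  fixes m p :: nat assumes p: "1 \<le> p" and pm: "p \<le> m"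
  shows "(harm m - harm p :: real) \<le> ((real m)\<^sup>2 - (real p)\<^sup>2) / (2 * real m * real p)"
proof -
  have "harm (p + (m - p)) - harm p \<le> (real m / (2 * real p) - real p / (2 * real m))
      - (real m / (2 * (real p + real (m - p))) - (real p + real (m - p)) / (2 * real m))"
    using harm_diff_upper_gen[OF p, of "m - p" m] pm by simp
  moreover have "p + (m - p) = m" using pm by simp
  moreover have "real p + real (m - p) = real m" using pm by (simp add: of_nat_diff)
  ultimately have "harm m - harm p \<le> real m / (2 * real p) - real p / (2 * real m)" using pm p by simp
  also have "\<dots> = ((real m)\<^sup>2 - (real p)\<^sup>2) / (2 * real m * real p)"
    using p pm by (simp add: field_simps power2_eq_square)
  finally show ?thesis .
qed

lemma qs_mean_alt: "qs_mean k = 2 * (real k + 1) * harm (Suc k) - 2 - 4 * real k"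
  by (simp add: qs_mean_def harm_Suc field_simps)

lemma cc_alt:
  assumes a: "a < n"
  shows "cc n a = (real n + 1) - 2 * (real a + 1) * (harm (Suc n) - harm (Suc a))
                  - 2 * (real n - real a) * (harm (Suc n) - harm (n - a))"
proof -
  have q: "Suc (n - 1 - a) = n - a" using a by simp
  have "real (n - 1 - a) = real n - real a - 1" using a by (simp add: of_nat_diff)
  thus ?thesis unfolding cc_def qs_mean_alt q by (simp add: algebra_simps)
qed

lemma cc_upper:
  assumes a: "a < n"
  shows "cc n a \<le> ((real a + 1) - (real n - real a))\<^sup>2 / (real n + 1)"
proof -
  define P where "P = real a + 1"
  define Q where "Q = real n - real a"
  define M where "M = real n + 1"
  have M0: "M > 0" by (simp add: M_def)
  have h1: "harm (Suc n) - harm (Suc a) \<ge> (real (Suc n) - real (Suc a)) / real (Suc n)"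
    using harm_diff_lower[where p = "Suc a" and d = "n - a"] a by (simp add: of_nat_diff ac_simps)
  hence h1': "harm (Suc n) - harm (Suc a) \<ge> Q / M" by (simp add: Q_def M_def add.commute)
  have h2: "harm (Suc n) - harm (n - a) \<ge> (real (Suc n) - real (n - a)) / real (Suc n)"
    using harm_diff_lower[where p = "n - a" and d = "Suc a"] a by (simp add: of_nat_diff ac_simps)
  hence h2': "harm (Suc n) - harm (n - a) \<ge> P / M" using a by (simp add: P_def M_def of_nat_diff add.commute)
  have P0: "P \<ge> 0" and Q0: "Q \<ge> 0" using a by (auto simp: P_def Q_def)
  have "2 * P * (harm (Suc n) - harm (Suc a)) \<ge> 2 * P * (Q / M)" using h1' P0 by (intro mult_left_mono) auto
  moreover have "2 * Q * (harm (Suc n) - harm (n - a)) \<ge> 2 * Q * (P / M)" using h2' Q0 by (intro mult_left_mono) auto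
  moreover have ca: "cc n a = M - 2 * P * (harm (Suc n) - harm (Suc a)) - 2 * Q * (harm (Suc n) - harm (n - a))"
    using cc_alt[OF a] by (simp add: P_def Q_def M_def)
  moreover have "2 * P * (Q / M) + 2 * Q * (P / M) = 4 * P * Q / M" by (simp add: field_simps)
  ultimately have "cc n a \<le> M - 4 * P * Q / M" by linarith
  also have "\<dots> = (P - Q)\<^sup>2 / M" using M0 by (simp add: M_def P_def Q_def field_simps power2_eq_square)
  finally show ?thesis by (simp add: P_def Q_def M_def)
qed

lemma cc_lower:
  assumes a: "a < n"
  shows "- 2 * (real a + 1) * (real n - real a) / (real n + 1) \<le> cc n a"
proof -
  define P where "P = real a + 1"
  define Q where "Q = real n - real a"
  define M where "M = real n + 1"
  have M0: "M > 0" by (simp add: M_def)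
  have P0: "P > 0" and Q0: "Q > 0" using a by (auto simp: P_def Q_def)
  have h1: "harm (Suc n) - harm (Suc a) \<le> (M\<^sup>2 - P\<^sup>2) / (2 * M * P)"
    using harm_diff_upper[where p = "Suc a" and m = "Suc n"] a by (simp add: P_def M_def ac_simps)
  have h2: "harm (Suc n) - harm (n - a) \<le> (M\<^sup>2 - Q\<^sup>2) / (2 * M * Q)"
    using harm_diff_upper[where p = "n - a" and m = "Suc n"] a by (simp add: Q_def M_def of_nat_diff ac_simps)
  have "2 * P * (harm (Suc n) - harm (Suc a)) \<le> 2 * P * ((M\<^sup>2 - P\<^sup>2) / (2 * M * P))"
    using h1 P0 by (intro mult_left_mono) auto
  also have "\<dots> = (M\<^sup>2 - P\<^sup>2) / M" using P0 M0 by (simp add: field_simps)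
  finally have 1: "2 * P * (harm (Suc n) - harm (Suc a)) \<le> (M\<^sup>2 - P\<^sup>2) / M" .
  have "2 * Q * (harm (Suc n) - harm (n - a)) \<le> 2 * Q * ((M\<^sup>2 - Q\<^sup>2) / (2 * M * Q))"
    using h2 Q0 by (intro mult_left_mono) auto
  also have "\<dots> = (M\<^sup>2 - Q\<^sup>2) / M" using Q0 M0 by (simp add: field_simps)
  finally have 2: "2 * Q * (harm (Suc n) - harm (n - a)) \<le> (M\<^sup>2 - Q\<^sup>2) / M" .
  have ca: "cc n a = M - 2 * P * (harm (Suc n) - harm (Suc a)) - 2 * Q * (harm (Suc n) - harm (n - a))"
    using cc_alt[OF a] by (simp add: P_def Q_def M_def)
  have "cc n a \<ge> M - (M\<^sup>2 - P\<^sup>2) / M - (M\<^sup>2 - Q\<^sup>2) / M"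
    using ca 1 2 by linarith
  moreover have "M - (M\<^sup>2 - P\<^sup>2) / M - (M\<^sup>2 - Q\<^sup>2) / M = - 2 * P * Q / M"
    using M0 unfolding M_def P_def Q_def by (simp add: divide_simps) (simp add: algebra_simps power2_eq_square)
  ultimately show ?thesis by (simp add: P_def Q_def M_def)
qed

lemma cc_sym: "a < n \<Longrightarrow> cc n (n - 1 - a) = cc n a"
  by (simp add: cc_def algebra_simps)

lemma qs_mean_sum: "2 * (\<Sum>a<n. qs_mean a) = real n * qs_mean n - real n * (real n - 1)"
proof (induction n)
  case 0 thus ?case by simp
next
  case (Suc n)
  have "2 * (\<Sum>a<Suc n. qs_mean a) = real n * qs_mean n - real n * (real n - 1) + 2 * qs_mean n"
    using Suc by simp
  also have "\<dots> = real (Suc n) * qs_mean (Suc n) - real (Suc n) * (real (Suc n) - 1)"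
    by (simp add: qs_mean_def harm_Suc field_simps)
  finally show ?case .
qed

lemma cc_sum: "(\<Sum>a<n. cc n a) = 0"
proof -
  have r: "(\<Sum>a<n. qs_mean (n - 1 - a)) = (\<Sum>a<n. qs_mean a)"
    using sum.nat_diff_reindex[of qs_mean n] by (simp add: Suc_diff_Suc)
  have "(\<Sum>a<n. cc n a) = real n * (real n - 1) + (\<Sum>a<n. qs_mean a) + (\<Sum>a<n. qs_mean (n - 1 - a)) - real n * qs_mean n"
    by (simp add: cc_def sum.distrib sum_subtractf)
  also have "\<dots> = 0" using r qs_mean_sum[of n] by simp
  finally show ?thesis .
qed

lemma prob_le_expect:
  fixes p :: "nat pmf" and A :: "nat set" and f :: "nat \<Rightarrow> real"
  assumes fin: "finite (set_pmf p)" and f: "\<And>k. f k \<ge> 0" and fA: "\<And>k. k \<in> A \<Longrightarrow> f k \<ge> 1"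
  shows "measure_pmf.prob p A \<le> measure_pmf.expectation p f"
proof -
  have "measure_pmf.prob p A = measure_pmf.expectation p (indicator A)" by simp
  also have "\<dots> \<le> measure_pmf.expectation p f"
  proof (rule integral_mono)
    show "integrable (measure_pmf p) (indicator A :: nat \<Rightarrow> real)" by (rule integrable_measure_pmf_finite[OF fin])
    show "integrable (measure_pmf p) f" by (rule integrable_measure_pmf_finite[OF fin])
    fix k show "(indicator A k :: real) \<le> f k" using f fA by (cases "k \<in> A") auto
  qed
  finally show ?thesis .
qed

lemma chernoff_upper:
  assumes t: "t \<ge> 0"
  shows "measure_pmf.prob (qs_pmf n) {k. x \<le> real k - qs_mean n} \<le> GG n t * exp (- (t * x))"
proof -
  have "measure_pmf.prob (qs_pmf n) {k. x \<le> real k - qs_mean n}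
      \<le> measure_pmf.expectation (qs_pmf n) (\<lambda>k. exp (t * (real k - qs_mean n)) * exp (- (t * x)))"
  proof (rule prob_le_expect[OF qs_pmf_finite])
    fix k assume "k \<in> {k. x \<le> real k - qs_mean n}"
    hence "t * x \<le> t * (real k - qs_mean n)" using t by (intro mult_left_mono) auto
    hence "0 \<le> t * (real k - qs_mean n) + - (t * x)" by simp
    thus "1 \<le> exp (t * (real k - qs_mean n)) * exp (- (t * x))" by (simp flip: exp_add)
  qed simp
  thus ?thesis by (simp add: GG_def)
qed

lemma chernoff_lower:
  assumes t: "t \<ge> 0"
  shows "measure_pmf.prob (qs_pmf n) {k. x \<le> qs_mean n - real k} \<le> GG n (- t) * exp (- (t * x))"
proof -
  have "measure_pmf.prob (qs_pmf n) {k. x \<le> qs_mean n - real k}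
      \<le> measure_pmf.expectation (qs_pmf n) (\<lambda>k. exp ((- t) * (real k - qs_mean n)) * exp (- (t * x)))"
  proof (rule prob_le_expect[OF qs_pmf_finite])
    fix k assume "k \<in> {k. x \<le> qs_mean n - real k}"
    hence "t * x \<le> t * (qs_mean n - real k)" using t by (intro mult_left_mono) auto
    hence "0 \<le> (- t) * (real k - qs_mean n) + - (t * x)" by (simp add: algebra_simps)
    thus "1 \<le> exp ((- t) * (real k - qs_mean n)) * exp (- (t * x))" by (simp flip: exp_add)
  qed simp
  thus ?thesis by (simp add: GG_def)
qed

lemma harm_ge_ln_half:
  assumes "n \<ge> 1"
  shows "harm n \<ge> ln (real n) + 1/2"
proof -
  obtain m where m: "n = Suc m" using assms by (cases n) auto
  have lim: "(\<lambda>k. harm (Suc k) - ln (real (Suc k)) :: real) \<longlonglongrightarrow> euler_mascheroni"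
    using LIMSEQ_Suc[OF euler_mascheroni_LIMSEQ] by simp
  have "euler_mascheroni \<le> harm (Suc m) - ln (real (Suc m))"
    using decseq_ge[OF decseq_harm_diff_ln lim] by simp
  moreover have "euler_mascheroni > (19/33 :: real)" by (rule euler_mascheroni_gt_19_over_33)
  ultimately show ?thesis using m by simp
qed

interpretation ccb: cbounds n "cc n" for n
proof
  fix a assume "a < n"
  thus "cc n a \<le> ((real a + 1) - (real n - real a))\<^sup>2 / (real n + 1)" by (rule cc_upper)
next
  fix a assume "a < n"
  thus "- 2 * (real a + 1) * (real n - real a) / (real n + 1) \<le> cc n a" by (rule cc_lower)
next
  fix a assume "a < n"
  thus "cc n (n - 1 - a) = cc n a" by (rule cc_sym)
next
  show "(\<Sum>a<n. cc n a) = 0" by (rule cc_sum)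
qed

lemma Phi_nonneg: "Phi x \<ge> 0"
proof -
  have "exp x - 1 - x \<ge> 0" using exp_ge_add_one_self[of x] by linarith
  thus ?thesis by (simp add: Phi_def)
qed

lemma Phi_le_max: "Phi x \<le> max (12 * x\<^sup>2) (2 * exp x)"
proof (cases "x \<le> 21/4")
  case True thus ?thesis by (simp add: Phi_def)
next
  case False
  hence "Phi x = 2 * (exp x - 1 - x)" by (intro Phi_big) auto
  also have "\<dots> \<le> 2 * exp x" using False by simp
  finally show ?thesis by simp
qed

lemma qs_mean_1: "qs_mean (Suc 0) = 0" by (simp add: qs_mean_def harm_def)

lemma GG_sum_bound:
  assumes n: "n \<ge> 1" and F: "\<And>k. k < n \<Longrightarrow> GG k t \<le> exp (F k)"
  shows "GG n t \<le> (\<Sum>a<n. exp (F a + F (n - 1 - a) + t * cc n a)) / real n"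
proof -
  have "GG n t = (\<Sum>a<n. GG a t * GG (n - 1 - a) t * exp (t * cc n a)) / real n" by (rule GG_rec[OF n])
  also have "\<dots> \<le> (\<Sum>a<n. exp (F a) * exp (F (n - 1 - a)) * exp (t * cc n a)) / real n"
  proof (intro divide_right_mono sum_mono mult_right_mono mult_mono)
    fix a assume "a \<in> {..<n}"
    hence a: "a < n" by simp
    show "GG a t \<le> exp (F a)" using F[OF a] .
    show "GG (n - 1 - a) t \<le> exp (F (n - 1 - a))" using F a by simp
  qed (auto simp: GG_nonneg)
  also have "\<dots> = (\<Sum>a<n. exp (F a + F (n - 1 - a) + t * cc n a)) / real n"
    by (simp add: exp_add)
  finally show ?thesis .
qed

lemma GG_upper:
  assumes t: "t > 0"
  shows "GG n t \<le> exp (Phi (t * real n))"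
proof (induction n rule: less_induct)
  case (less n)
  consider "n = 0" | "n = 1" | "n \<ge> 2" by linarith
  thus ?case
  proof cases
    case 1 thus ?thesis by (simp add: GG_0 Phi_def)
  next
    case 2
    have "GG 1 t = GG 0 t * GG 0 t * exp (t * cc 1 0)" using GG_rec[of 1 t] by simp
    also have "\<dots> = 1" by (simp add: GG_0 cc_def qs_mean_0 qs_mean_1)
    also have "1 \<le> exp (Phi (t * real 1))" using Phi_nonneg by simp
    finally show ?thesis using 2 by simp
  next
    case 3
    have "GG n t \<le> (\<Sum>a<n. exp (Phi (t * real a) + Phi (t * real (n - 1 - a)) + t * cc n a)) / real n"
      by (rule GG_sum_bound) (use 3 less in auto)
    also have "\<dots> \<le> real n * exp (Phi (t * real n)) / real n"
      by (intro divide_right_mono ccb.step_upper[OF t 3]) auto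
    also have "\<dots> = exp (Phi (t * real n))" using 3 by simp
    finally show ?thesis .
  qed
qed

lemma GG_lower:
  assumes r: "r > 0"
  shows "GG n (- r) \<le> exp (12 * (r * real n)\<^sup>2)"
proof (induction n rule: less_induct)
  case (less n)
  show ?case
  proof (cases "n = 0")
    case True thus ?thesis by (simp add: GG_0)
  next
    case False
    hence n: "n \<ge> 1" by simp
    have "GG n (- r) \<le> (\<Sum>a<n. exp (12 * (r * real a)\<^sup>2 + 12 * (r * real (n - 1 - a))\<^sup>2 + (- r) * cc n a)) / real n"
      by (rule GG_sum_bound[where F = "\<lambda>k. 12 * (r * real k)\<^sup>2"]) (use n less in auto)
    also have "\<dots> \<le> real n * exp (12 * (r * real n)\<^sup>2) / real n"
      by (intro divide_right_mono ccb.step_lower[OF r n]) auto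
    also have "\<dots> = exp (12 * (r * real n)\<^sup>2)" using n by simp
    finally show ?thesis .
  qed
qed

lemma qs_mean_lower:
  assumes n: "n \<ge> 1"
  shows "qs_mean n \<ge> real n * (2 * ln (real n) - 3)"
proof -
  have h: "harm n \<ge> ln (real n) + 1/2" by (rule harm_ge_ln_half[OF n])
  have h0: "(harm n :: real) \<ge> 0" by (rule harm_nonneg)
  have "qs_mean n = 2 * real n * harm n + 2 * harm n - 4 * real n" by (simp add: qs_mean_def algebra_simps)
  also have "\<dots> \<ge> 2 * real n * (ln (real n) + 1/2) + 0 - 4 * real n"
    using h h0 by (intro diff_right_mono add_mono mult_left_mono) auto
  finally show ?thesis by (simp add: algebra_simps)
qed

theorem corollary7p3:
  fixes n :: nat and eps l :: real
  assumes "n \<ge> 1" and "eps > 0" and "l > 0"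
  shows "measure_pmf.prob (qs_pmf n) {k. \<bar>real k - qs_mean n\<bar> \<ge> eps * qs_mean n}
           \<le> 2 * exp (3 * eps * l + max (12 * l\<^sup>2) (2 * exp l))
               * real n powr (- 2 * eps * l)"
proof -
  note n = assms(1) and e = assms(2) and l = assms(3)
  define mu where "mu = qs_mean n"
  define t where "t = l / real n"
  define Mx where "Mx = max (12 * l\<^sup>2) (2 * exp l)"
  have n0: "real n > 0" using n by simp
  have t0: "t > 0" using l n0 by (simp add: t_def)
  have tn: "t * real n = l" using n0 by (simp add: t_def)
  have musub: "{k. \<bar>real k - mu\<bar> \<ge> eps * mu} \<subseteq> {k. eps * mu \<le> real k - mu} \<union> {k. eps * mu \<le> mu - real k}"
    by auto
  have key: "exp (- (t * (eps * mu))) \<le> exp (3 * eps * l) * real n powr (- 2 * eps * l)"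
  proof -
    have "mu \<ge> real n * (2 * ln (real n) - 3)" using qs_mean_lower[OF n] by (simp add: mu_def)
    hence "t * mu \<ge> t * (real n * (2 * ln (real n) - 3))" using t0 by (intro mult_left_mono) auto
    hence "t * mu \<ge> (t * real n) * (2 * ln (real n) - 3)" by (simp add: mult.assoc)
    hence "t * mu \<ge> l * (2 * ln (real n) - 3)" using tn by simp
    hence "eps * (t * mu) \<ge> eps * (l * (2 * ln (real n) - 3))" using e by (intro mult_left_mono) auto
    hence "- (t * (eps * mu)) \<le> 3 * eps * l + (- 2 * eps * l) * ln (real n)" by (simp add: algebra_simps)
    hence "exp (- (t * (eps * mu))) \<le> exp (3 * eps * l + (- 2 * eps * l) * ln (real n))" by simp
    also have "\<dots> = exp (3 * eps * l) * real n powr (- 2 * eps * l)"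
      using n0 by (simp add: powr_def flip: exp_add)
    finally show ?thesis .
  qed
  have pU: "measure_pmf.prob (qs_pmf n) {k. eps * mu \<le> real k - mu} \<le> exp Mx * (exp (3 * eps * l) * real n powr (- 2 * eps * l))"
  proof -
    have "measure_pmf.prob (qs_pmf n) {k. eps * mu \<le> real k - mu} \<le> GG n t * exp (- (t * (eps * mu)))"
      using chernoff_upper[of t n "eps * mu"] t0 by (simp add: mu_def)
    also have "\<dots> \<le> exp Mx * (exp (3 * eps * l) * real n powr (- 2 * eps * l))"
    proof (rule mult_mono)
      have "GG n t \<le> exp (Phi l)" using GG_upper[OF t0, of n] tn by simp
      also have "\<dots> \<le> exp Mx" using Phi_le_max[of l] by (simp add: Mx_def)
      finally show "GG n t \<le> exp Mx" .
    qed (use key in auto)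
    finally show ?thesis .
  qed
  have pL: "measure_pmf.prob (qs_pmf n) {k. eps * mu \<le> mu - real k} \<le> exp Mx * (exp (3 * eps * l) * real n powr (- 2 * eps * l))"
  proof -
    have "measure_pmf.prob (qs_pmf n) {k. eps * mu \<le> mu - real k} \<le> GG n (- t) * exp (- (t * (eps * mu)))"
      using chernoff_lower[of t n "eps * mu"] t0 by (simp add: mu_def)
    also have "\<dots> \<le> exp Mx * (exp (3 * eps * l) * real n powr (- 2 * eps * l))"
    proof (rule mult_mono)
      have "GG n (- t) \<le> exp (12 * (t * real n)\<^sup>2)" by (rule GG_lower[OF t0])
      also have "\<dots> = exp (12 * l\<^sup>2)" using tn by simp
      also have "\<dots> \<le> exp Mx" by (simp add: Mx_def)
      finally show "GG n (- t) \<le> exp Mx" .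
    qed (use key GG_nonneg in auto)
    finally show ?thesis .
  qed
  have "measure_pmf.prob (qs_pmf n) {k. \<bar>real k - qs_mean n\<bar> \<ge> eps * qs_mean n}
      \<le> measure_pmf.prob (qs_pmf n) ({k. eps * mu \<le> real k - mu} \<union> {k. eps * mu \<le> mu - real k})"
    using musub unfolding mu_def by (intro measure_pmf.finite_measure_mono) auto
  also have "\<dots> \<le> measure_pmf.prob (qs_pmf n) {k. eps * mu \<le> real k - mu} + measure_pmf.prob (qs_pmf n) {k. eps * mu \<le> mu - real k}"
    by (rule measure_Un_le) auto
  also have "\<dots> \<le> 2 * (exp Mx * (exp (3 * eps * l) * real n powr (- 2 * eps * l)))"
    using pU pL by simp
  also have "\<dots> = 2 * exp (3 * eps * l + Mx) * real n powr (- 2 * eps * l)"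
    by (simp add: exp_add)
  finally show ?thesis by (simp add: Mx_def)
qed

end
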